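(* Let $\Lambda$ be a finite-dimensional $k$-algebra with orthogonal primitive idempotents $1=e_1+e_2$. Identifying $K_0(\operatorname{proj}\Lambda)\otimes\mathbb{R}$ with $\mathbb{R}^2$ via $[e_1\Lambda]\mapsto(1,0)$, $[e_2\Lambda]\mapsto(0,1)$: (a) $\operatorname{cone}\{(-1,0),(0,1)\}\in\Sigma(\Lambda)$ if and only if $e_2\Lambda e_1=0$; (b) $\operatorname{cone}\{(1,0),(0,-1)\}\in\Sigma(\Lambda)$ if and only if $e_1\Lambda e_2=0$.
   Context: $k$ is a field. $\Sigma(\Lambda)$ is the $g$-fan: the set of cones $\operatorname{cone}\{[T_1],\dots,[T_m]\}$ for basic 2-term presilting complexes $T=T_1\oplus\cdots\oplus T_m$ ($T_i$ indecomposable) in $K^b(\operatorname{proj}\Lambda)$, where 2-term means $T^i=0$ for $i\ne0,-1$, presilting means $\operatorname{Hom}(T,T[\ell])=0$ for $\ell>0$, and $[T]=[T^0]-[T^{-1}]$. *)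

theory Defs
  imports "HOL-Analysis.Analysis"
begin

text \<open>The ring type 'a is Lambda; sc is the action of the field k making Lambda a
finite-dimensional k-algebra.\<close>

definition fd_algebra :: "('k::field \<Rightarrow> 'a::ring_1 \<Rightarrow> 'a) \<Rightarrow> bool" where
  "fd_algebra sc \<longleftrightarrow> vector_space sc
     \<and> (\<forall>c x y. sc c (x * y) = sc c x * y \<and> sc c (x * y) = x * sc c y)
     \<and> (\<exists>B. finite B \<and> module.span sc B = UNIV)"

definition idem :: "'a::ring_1 \<Rightarrow> bool" where
  "idem e \<longleftrightarrow> e * e = e"

definition primitive_idem :: "'a::ring_1 \<Rightarrow> bool" where
  "primitive_idem e \<longleftrightarrow> idem e \<and> e \<noteq> 0 \<and>
     (\<forall>f g. idem f \<and> idem g \<and> f * g = 0 \<and> g * f = 0 \<and> f + g = e \<longrightarrow> f = 0 \<or> g = 0)"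

definition corner :: "'a::ring_1 \<Rightarrow> 'a \<Rightarrow> 'a set" where
  "corner e e' = {e * x * e' | x. True}"

text \<open>A projective is a list [eps_1,...,eps_n] of idempotents (from {e1,e2}), standing for
the right module eps_1 Lambda (+) ... (+) eps_n Lambda.  A morphism
(+)_q eps_q Lambda \<rightarrow> (+)_p delta_p Lambda is a matrix with entries M p q in delta_p Lambda eps_q,
acting by left multiplication; composition is matrix multiplication.\<close>

type_synonym 'a mat = "nat \<Rightarrow> nat \<Rightarrow> 'a"

definition hom :: "'a::ring_1 list \<Rightarrow> 'a list \<Rightarrow> 'a mat set" where
  "hom xs ys = {M. \<forall>p q. (p < length ys \<and> q < length xs \<longrightarrow> M p q \<in> corner (ys ! p) (xs ! q))
                       \<and> (\<not> (p < length ys \<and> q < length xs) \<longrightarrow> M p q = 0)}"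

definition mmul :: "nat \<Rightarrow> 'a::ring_1 mat \<Rightarrow> 'a mat \<Rightarrow> 'a mat" where
  "mmul n M N = (\<lambda>p r. \<Sum>q<n. M p q * N q r)"

definition madd :: "'a::ring_1 mat \<Rightarrow> 'a mat \<Rightarrow> 'a mat" where
  "madd M N = (\<lambda>p q. M p q + N p q)"

definition msub :: "'a::ring_1 mat \<Rightarrow> 'a mat \<Rightarrow> 'a mat" where
  "msub M N = (\<lambda>p q. M p q - N p q)"

definition idm :: "'a::ring_1 list \<Rightarrow> 'a mat" where
  "idm xs = (\<lambda>p q. if p = q \<and> p < length xs then xs ! p else 0)"

text \<open>A 2-term complex T = (T^{-1}, T^0, d) with d : T^{-1} \<rightarrow> T^0.\<close>
type_synonym 'a cx = "'a list \<times> 'a list \<times> 'a mat"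

definition src :: "'a cx \<Rightarrow> 'a list" where "src T = fst T"
definition tgt :: "'a cx \<Rightarrow> 'a list" where "tgt T = fst (snd T)"
definition dif :: "'a cx \<Rightarrow> 'a mat" where "dif T = snd (snd T)"

definition is_cx :: "'a::ring_1 \<Rightarrow> 'a \<Rightarrow> 'a cx \<Rightarrow> bool" where
  "is_cx e1 e2 T \<longleftrightarrow> set (src T) \<subseteq> {e1, e2} \<and> set (tgt T) \<subseteq> {e1, e2}
     \<and> dif T \<in> hom (src T) (tgt T)"

definition chain_map :: "'a::ring_1 cx \<Rightarrow> 'a cx \<Rightarrow> 'a mat \<times> 'a mat \<Rightarrow> bool" where
  "chain_map T U f \<longleftrightarrow> fst f \<in> hom (src T) (src U) \<and> snd f \<in> hom (tgt T) (tgt U)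
     \<and> mmul (length (tgt T)) (snd f) (dif T) = mmul (length (src U)) (dif U) (fst f)"

definition null_htp :: "'a::ring_1 cx \<Rightarrow> 'a cx \<Rightarrow> 'a mat \<times> 'a mat \<Rightarrow> bool" where
  "null_htp T U f \<longleftrightarrow> (\<exists>h \<in> hom (tgt T) (src U).
      fst f = mmul (length (tgt T)) h (dif T) \<and> snd f = mmul (length (src U)) (dif U) h)"

definition cm_comp :: "'a::ring_1 cx \<Rightarrow> 'a mat \<times> 'a mat \<Rightarrow> 'a mat \<times> 'a mat \<Rightarrow> 'a mat \<times> 'a mat" where
  "cm_comp U g f = (mmul (length (src U)) (fst g) (fst f), mmul (length (tgt U)) (snd g) (snd f))"

definition cm_sub :: "'a::ring_1 mat \<times> 'a mat \<Rightarrow> 'a mat \<times> 'a mat \<Rightarrow> 'a mat \<times> 'a mat" where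
  "cm_sub f g = (msub (fst f) (fst g), msub (snd f) (snd g))"

definition cm_id :: "'a::ring_1 cx \<Rightarrow> 'a mat \<times> 'a mat" where
  "cm_id T = (idm (src T), idm (tgt T))"

definition kiso :: "'a::ring_1 cx \<Rightarrow> 'a cx \<Rightarrow> bool" where
  "kiso T U \<longleftrightarrow> (\<exists>f g. chain_map T U f \<and> chain_map U T g
      \<and> null_htp T T (cm_sub (cm_comp U g f) (cm_id T))
      \<and> null_htp U U (cm_sub (cm_comp T f g) (cm_id U)))"

definition zero_cx :: "'a::ring_1 cx" where
  "zero_cx = ([], [], \<lambda>_ _. 0)"

definition is_zero :: "'a::ring_1 cx \<Rightarrow> bool" where
  "is_zero T \<longleftrightarrow> kiso T zero_cx"

definition dsum :: "'a::ring_1 cx \<Rightarrow> 'a cx \<Rightarrow> 'a cx" where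
  "dsum T U = (src T @ src U, tgt T @ tgt U,
     \<lambda>p q. if p < length (tgt T) then (if q < length (src T) then dif T p q else 0)
           else (if q < length (src T) then 0
                 else dif U (p - length (tgt T)) (q - length (src T))))"

definition indec :: "'a::ring_1 \<Rightarrow> 'a \<Rightarrow> 'a cx \<Rightarrow> bool" where
  "indec e1 e2 T \<longleftrightarrow> is_cx e1 e2 T \<and> \<not> is_zero T \<and>
     (\<forall>U V. is_cx e1 e2 U \<and> is_cx e1 e2 V \<and> kiso T (dsum U V) \<longrightarrow> is_zero U \<or> is_zero V)"

text \<open>For a 2-term complex T, Hom(T,T[l]) = 0 automatically for l \<ge> 2, and Hom(T,T[1]) is the
space of maps h : T^{-1} \<rightarrow> T^0 modulo those of the form s d + d t (null-homotopic ones).\<close>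
definition presilting :: "'a::ring_1 cx \<Rightarrow> bool" where
  "presilting T \<longleftrightarrow> (\<forall>h \<in> hom (src T) (tgt T). \<exists>s \<in> hom (tgt T) (tgt T). \<exists>t \<in> hom (src T) (src T).
      h = madd (mmul (length (tgt T)) s (dif T)) (mmul (length (src T)) (dif T) t))"

definition mult :: "'a \<Rightarrow> 'a list \<Rightarrow> nat" where
  "mult e xs = length (filter (\<lambda>x. x = e) xs)"

definition gvec :: "'a \<Rightarrow> 'a \<Rightarrow> 'a cx \<Rightarrow> real \<times> real" where
  "gvec e1 e2 T = (real (mult e1 (tgt T)) - real (mult e1 (src T)),
                   real (mult e2 (tgt T)) - real (mult e2 (src T)))"

definition poscone :: "(real \<times> real) set \<Rightarrow> (real \<times> real) set" where
  "poscone S = {\<Sum>v\<in>F. c v *\<^sub>R v | F c. finite F \<and> F \<subseteq> S \<and> (\<forall>v. c v \<ge> 0)}"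

definition gfan :: "'a::ring_1 \<Rightarrow> 'a \<Rightarrow> (real \<times> real) set set" where
  "gfan e1 e2 = {poscone (gvec e1 e2 ` set Ts) | Ts.
      (\<forall>T \<in> set Ts. indec e1 e2 T)
      \<and> (\<forall>i < length Ts. \<forall>j < length Ts. i \<noteq> j \<longrightarrow> \<not> kiso (Ts ! i) (Ts ! j))
      \<and> presilting (foldr dsum Ts zero_cx)}"

end

theory Submission
  imports Defs "HOL-Library.Function_Algebras"
begin

context vector_space begin

definition fspan :: "'b set \<Rightarrow> bool" where
  "fspan S \<longleftrightarrow> (\<exists>F. finite F \<and> S \<subseteq> local.span F)"

lemma fspan_subset: "S \<subseteq> T \<Longrightarrow> local.fspan T \<Longrightarrow> local.fspan S"
  unfolding fspan_def by blast


lemma basis_fin: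
  assumes "local.fspan S"
  obtains B where "B \<subseteq> S" "local.independent B" "S \<subseteq> local.span B" "finite B" "card B = local.dim S"
proof -
  obtain B where B: "B \<subseteq> S" "local.independent B" "S \<subseteq> local.span B" "card B = local.dim S"
    using basis_exists by blast
  obtain F where F: "finite F" "S \<subseteq> local.span F" using assms fspan_def by blast
  have "finite B" using independent_span_bound[OF F(1) B(2)] B(1) F(2) by blast
  with B that show ?thesis by blast
qed

lemma dim_mono_f: "V \<subseteq> local.span W \<Longrightarrow> local.fspan W \<Longrightarrow> local.dim V \<le> local.dim W"
proof -
  assume V: "V \<subseteq> local.span W" and W: "local.fspan W"
  obtain B where B: "B \<subseteq> W" "local.independent B" "W \<subseteq> local.span B" "finite B" "card B = local.dim W"
    using basis_fin[OF W] by blast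
  have "V \<subseteq> local.span B" using V B(3) by (metis span_mono span_span subset_trans)
  then show ?thesis using dim_le_card[OF _ B(4)] B(5) by simp
qed

lemma card_le_dim_f:
  assumes "local.independent B" "B \<subseteq> V" "local.fspan V"
  shows "finite B \<and> card B \<le> local.dim V"
proof -
  obtain C where C: "C \<subseteq> V" "local.independent C" "V \<subseteq> local.span C" "finite C" "card C = local.dim V"
    using basis_fin[OF assms(3)] by blast
  show ?thesis using independent_span_bound[OF C(4) assms(1)] assms(2) C by auto
qed

lemma dim_zero_f: "local.fspan S \<Longrightarrow> local.dim S = 0 \<Longrightarrow> S \<subseteq> {0}"
proof -
  assume "local.fspan S" "local.dim S = 0"
  then obtain B where B: "B \<subseteq> S" "local.independent B" "S \<subseteq> local.span B" "finite B" "card B = 0"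
    using basis_fin by metis
  then have "B = {}" by simp
  with B show ?thesis by simp
qed

lemma dim_zero_space: "local.dim {0} = 0"
  using basis_card_eq_dim[of "{}" "{0}"] independent_empty by simp

definition vsum :: "'b set \<Rightarrow> 'b set \<Rightarrow> 'b set" where
  "vsum A B = {x + y | x y. x \<in> A \<and> y \<in> B}"

lemma independent_Un_direct:
  assumes A: "local.subspace A" and B: "local.subspace B" and AB: "A \<inter> B \<subseteq> {0}"
    and iA: "local.independent BA" and iB: "local.independent BB" and sA: "BA \<subseteq> A" and sB: "BB \<subseteq> B"
  shows "local.independent (BA \<union> BB)"
  unfolding independent_explicit_finite_subsets
proof (intro allI impI ballI)
  fix T u v
  assume T: "T \<subseteq> BA \<union> BB" "finite T" and s: "(\<Sum>v\<in>T. scale (u v) v) = 0" and v: "v \<in> T"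
  define TA where "TA = T \<inter> BA"
  define TB where "TB = T - BA"
  have fin: "finite TA" "finite TB" using T TA_def TB_def by auto
  have "T = TA \<union> TB" "TA \<inter> TB = {}" unfolding TA_def TB_def by auto
  then have split: "(\<Sum>v\<in>T. scale (u v) v) = (\<Sum>v\<in>TA. scale (u v) v) + (\<Sum>v\<in>TB. scale (u v) v)"
    using fin by (simp add: sum.union_disjoint)
  have inA: "(\<Sum>v\<in>TA. scale (u v) v) \<in> A"
    by (rule subspace_sum[OF A]) (use sA TA_def subspace_scale[OF A] in blast)
  have TBB: "TB \<subseteq> BB" using T TB_def by auto
  have inB: "(\<Sum>v\<in>TB. scale (u v) v) \<in> B"
    by (rule subspace_sum[OF B]) (use sB TBB subspace_scale[OF B] in blast)
  have eq: "(\<Sum>v\<in>TA. scale (u v) v) = - (\<Sum>v\<in>TB. scale (u v) v)"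
    using split s by (simp add: eq_neg_iff_add_eq_0)
  have "(\<Sum>v\<in>TA. scale (u v) v) \<in> B" using eq inB subspace_neg[OF B] by simp
  then have z1: "(\<Sum>v\<in>TA. scale (u v) v) = 0" using inA AB by blast
  then have z2: "(\<Sum>v\<in>TB. scale (u v) v) = 0" using eq by simp
  show "u v = 0"
  proof (cases "v \<in> TA")
    case True
    then show ?thesis using independentD[OF iA fin(1) _ z1] TA_def by blast
  next
    case False
    then have "v \<in> TB" using v TA_def TB_def by auto
    then show ?thesis using independentD[OF iB fin(2) TBB z2] by blast
  qed
qed

lemma dim_vsum_direct:
  assumes A: "local.subspace A" and B: "local.subspace B" and AB: "A \<inter> B \<subseteq> {0}"
    and fA: "local.fspan A" and fB: "local.fspan B"
  shows "local.subspace (local.vsum A B) \<and> local.fspan (local.vsum A B) \<and> local.dim (local.vsum A B) = local.dim A + local.dim B"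
proof -
  obtain BA where a: "BA \<subseteq> A" "local.independent BA" "A \<subseteq> local.span BA" "finite BA" "card BA = local.dim A"
    using basis_fin[OF fA] by blast
  obtain BB where b: "BB \<subseteq> B" "local.independent BB" "B \<subseteq> local.span BB" "finite BB" "card BB = local.dim B"
    using basis_fin[OF fB] by blast
  have sub: "local.subspace (local.vsum A B)" unfolding vsum_def by (rule subspace_sums[OF A B])
  have ind: "local.independent (BA \<union> BB)" by (rule independent_Un_direct[OF A B AB a(2) b(2) a(1) b(1)])
  have disj: "BA \<inter> BB = {}"
  proof (rule ccontr)
    assume "BA \<inter> BB \<noteq> {}"
    then obtain x where "x \<in> BA" "x \<in> BB" by blast
    then have "x = 0" using a(1) b(1) AB by blast
    then show False using \<open>x \<in> BA\<close> a(2) dependent_zero by blast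
  qed
  have sp: "local.vsum A B \<subseteq> local.span (BA \<union> BB)"
  proof
    fix z assume "z \<in> local.vsum A B"
    then obtain x y where "z = x + y" "x \<in> A" "y \<in> B" unfolding vsum_def by blast
    then show "z \<in> local.span (BA \<union> BB)"
      using a(3) b(3) span_mono[of BA "BA \<union> BB"] span_mono[of BB "BA \<union> BB"] span_add by blast
  qed
  have incl: "BA \<union> BB \<subseteq> local.vsum A B"
  proof
    fix x assume "x \<in> BA \<union> BB"
    then show "x \<in> local.vsum A B"
    proof
      assume "x \<in> BA" then have "x = x + 0" "x \<in> A" "0 \<in> B" using a(1) subspace_0[OF B] by auto
      then show ?thesis unfolding vsum_def by blast
    next
      assume "x \<in> BB" then have "x = 0 + x" "x \<in> B" "0 \<in> A" using b(1) subspace_0[OF A] by auto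
      then show ?thesis unfolding vsum_def by blast
    qed
  qed
  have "card (BA \<union> BB) = local.dim (local.vsum A B)" by (rule basis_card_eq_dim[OF incl sp ind])
  moreover have "card (BA \<union> BB) = card BA + card BB" using disj a(4) b(4) card_Un_disjoint by blast
  moreover have "local.fspan (local.vsum A B)" unfolding fspan_def using sp a(4) b(4) by blast
  ultimately show ?thesis using sub a(5) b(5) by simp
qed

end

lemma linear_image_dims:
  assumes f: "Vector_Spaces.linear s1 s2 f" and S: "vector_space.fspan s1 S"
  shows "vector_space.fspan s2 (f ` S) \<and> vector_space.dim s2 (f ` S) \<le> vector_space.dim s1 S
     \<and> (inj_on f (module.span s1 S) \<longrightarrow> vector_space.dim s2 (f ` S) = vector_space.dim s1 S)"
proof -
  interpret L: Vector_Spaces.linear s1 s2 f by (rule f)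
  obtain B where B: "B \<subseteq> S" "L.vs1.independent B" "S \<subseteq> L.vs1.span B" "finite B" "card B = L.vs1.dim S"
    using L.vs1.basis_fin[OF S] by blast
  have im: "f ` S \<subseteq> L.vs2.span (f ` B)"
    using L.spans_image[OF B(3)] .
  have fs: "L.vs2.fspan (f ` S)" unfolding L.vs2.fspan_def using im B(4) by blast
  have le: "L.vs2.dim (f ` S) \<le> card (f ` B)" using L.vs2.dim_le_card[OF im] B(4) by simp
  also have "\<dots> \<le> card B" using card_image_le[OF B(4)] .
  finally have le2: "L.vs2.dim (f ` S) \<le> L.vs1.dim S" using B(5) by simp
  have eq: "L.vs2.dim (f ` S) = L.vs1.dim S" if inj: "inj_on f (L.vs1.span S)"
  proof -
    have injB: "inj_on f (L.vs1.span B)"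
      using inj by (rule inj_on_subset) (use B(1) L.vs1.span_mono in blast)
    have iB: "L.vs2.independent (f ` B)"
      by (rule L.independent_injective_image[OF B(2) injB])
    have "card (f ` B) = card B" using card_image[OF inj_on_subset[OF injB L.vs1.span_superset]] .
    moreover have "card (f ` B) \<le> L.vs2.dim (f ` S)"
      using L.vs2.card_le_dim_f[OF iB _ fs] B(1) by blast
    ultimately show ?thesis using le2 B(5) by simp
  qed
  show ?thesis using fs le2 eq by blast
qed


definition fsc :: "('k \<Rightarrow> 'b \<Rightarrow> 'b) \<Rightarrow> 'k \<Rightarrow> (nat \<Rightarrow> 'b) \<Rightarrow> (nat \<Rightarrow> 'b)" where
  "fsc s c f = (\<lambda>i. s c (f i))"

lemma vs_fun: "vector_space s \<Longrightarrow> vector_space (fsc s)"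
  unfolding vector_space_def fsc_def by (auto simp: fun_eq_iff)

definition PiS :: "nat \<Rightarrow> (nat \<Rightarrow> 'b set) \<Rightarrow> (nat \<Rightarrow> 'b::zero) set" where
  "PiS n S = {f. (\<forall>i<n. f i \<in> S i) \<and> (\<forall>i\<ge>n. f i = 0)}"

definition single :: "nat \<Rightarrow> 'b::zero \<Rightarrow> nat \<Rightarrow> 'b" where
  "single n x = (\<lambda>i. if i = n then x else 0)"

lemma linear_single: "vector_space s \<Longrightarrow> Vector_Spaces.linear s (fsc s) (single n)"
proof -
  assume vs: "vector_space s"
  interpret V: vector_space s by (rule vs)
  show ?thesis unfolding Vector_Spaces.linear_iff using vs_fun[OF vs] vs
    by (auto simp: single_def fsc_def fun_eq_iff)
qed

lemma PiS_dim:
  assumes vs: "vector_space s"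
    and S: "\<forall>i<n. module.subspace s (S i) \<and> vector_space.fspan s (S i)"
  shows "module.subspace (fsc s) (PiS n S) \<and> vector_space.fspan (fsc s) (PiS n S)
     \<and> vector_space.dim (fsc s) (PiS n S) = (\<Sum>i<n. vector_space.dim s (S i))"
  using S
proof (induction n)
  case 0
  interpret V: vector_space s by (rule vs)
  interpret F: vector_space "fsc s" by (rule vs_fun[OF vs])
  have "PiS 0 S = {0}" unfolding PiS_def by auto
  moreover have "F.fspan {0}" unfolding F.fspan_def by (rule exI[of _ "{}"]) simp
  ultimately show ?case using F.dim_zero_space by simp
next
  case (Suc n)
  interpret V: vector_space s by (rule vs)
  interpret F: vector_space "fsc s" by (rule vs_fun[OF vs])
  have IH: "F.subspace (PiS n S) \<and> F.fspan (PiS n S) \<and> F.dim (PiS n S) = (\<Sum>i<n. V.dim (S i))"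
    using Suc by auto
  have Sn: "V.subspace (S n)" "V.fspan (S n)" using Suc.prems by auto
  have lin: "Vector_Spaces.linear s (fsc s) (single n)" by (rule linear_single[OF vs])
  interpret L: Vector_Spaces.linear s "fsc s" "single n" by (rule lin)
  have inj: "inj_on (single n) (V.span (S n))"
    unfolding inj_on_def single_def by (auto simp: fun_eq_iff dest: spec[of _ n])
  have E: "F.fspan (single n ` S n) \<and> F.dim (single n ` S n) = V.dim (S n)"
    using linear_image_dims[OF lin Sn(2)] inj by auto
  have Esub: "F.subspace (single n ` S n)" by (rule L.subspace_image[OF Sn(1)])
  have int: "PiS n S \<inter> single n ` S n \<subseteq> {0}"
  proof
    fix f assume "f \<in> PiS n S \<inter> single n ` S n"
    then obtain x where "f = single n x" "f n = 0" unfolding PiS_def by auto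
    then show "f \<in> {0}" by (auto simp: single_def fun_eq_iff)
  qed
  have eq: "PiS (Suc n) S = F.vsum (PiS n S) (single n ` S n)"
  proof
    show "PiS (Suc n) S \<subseteq> F.vsum (PiS n S) (single n ` S n)"
    proof
      fix f assume f: "f \<in> PiS (Suc n) S"
      define g where "g = f(n := 0)"
      have "g \<in> PiS n S" using f unfolding PiS_def g_def by auto
      moreover have "f = g + single n (f n)" unfolding g_def single_def by (auto simp: fun_eq_iff)
      moreover have "f n \<in> S n" using f unfolding PiS_def by auto
      ultimately show "f \<in> F.vsum (PiS n S) (single n ` S n)" unfolding F.vsum_def by blast
    qed
  next
    show "F.vsum (PiS n S) (single n ` S n) \<subseteq> PiS (Suc n) S"
    proof
      fix f assume "f \<in> F.vsum (PiS n S) (single n ` S n)"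
      then obtain g x where "f = g + single n x" "g \<in> PiS n S" "x \<in> S n" unfolding F.vsum_def by blast
      then show "f \<in> PiS (Suc n) S" unfolding PiS_def single_def
        using V.subspace_0[OF Sn(1)] by (auto simp: less_Suc_eq)
    qed
  qed
  show ?case using F.dim_vsum_direct[OF conjunct1[OF IH] Esub int conjunct1[OF conjunct2[OF IH]] conjunct1[OF E]]
    eq E IH by simp
qed

definition trp :: "'a mat \<Rightarrow> 'a mat" where "trp M = (\<lambda>q p. M p q)"

definition mulv :: "'a::ring_1 mat \<Rightarrow> nat \<Rightarrow> (nat \<Rightarrow> 'a) \<Rightarrow> (nat \<Rightarrow> 'a)" where
  "mulv D n c = (\<lambda>p. \<Sum>r<n. D p r * c r)"

lemma trp_trp[simp]: "trp (trp M) = M" by (simp add: trp_def)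

lemma trp_image: "M \<in> trp ` X \<longleftrightarrow> trp M \<in> X"
proof
  assume "M \<in> trp ` X" then obtain y where "y \<in> X" "M = trp y" by blast
  then show "trp M \<in> X" by simp
next
  assume "trp M \<in> X" then show "M \<in> trp ` X" using image_eqI[of M trp "trp M"] by simp
qed

lemma corner_iff: "x \<in> corner a b \<longleftrightarrow> (\<exists>u. x = a * u * b)"
  unfolding corner_def by blast

lemma corner_mul: "x \<in> corner a b \<Longrightarrow> y \<in> corner b c \<Longrightarrow> x * y \<in> corner a c"
proof -
  assume "x \<in> corner a b" "y \<in> corner b c"
  then obtain u w where "x = a * u * b" "y = b * w * c" unfolding corner_iff by blast
  then have "x * y = a * (u * b * b * w) * c" by (simp add: mult.assoc)
  then show ?thesis unfolding corner_iff by blast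
qed

lemma corner_add: "x \<in> corner a b \<Longrightarrow> y \<in> corner a b \<Longrightarrow> x + y \<in> corner a b"
proof -
  assume "x \<in> corner a b" "y \<in> corner a b"
  then obtain u w where "x = a * u * b" "y = a * w * b" unfolding corner_iff by blast
  then have "x + y = a * (u + w) * b" by (simp add: distrib_left distrib_right)
  then show ?thesis unfolding corner_iff by blast
qed

lemma corner_zero[simp]: "0 \<in> corner a b"
  unfolding corner_iff by (rule exI[of _ 0]) simp

lemma corner_sum: "(\<And>i. i \<in> I \<Longrightarrow> f i \<in> corner a b) \<Longrightarrow> sum f I \<in> corner a b"
  by (induction I rule: infinite_finite_induct) (auto intro: corner_add)

lemma hom_eq: "hom P Q = trp ` PiS (length P) (\<lambda>q. PiS (length Q) (\<lambda>p. corner (Q!p) (P!q)))"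
proof -
  have "M \<in> hom P Q \<longleftrightarrow> trp M \<in> PiS (length P) (\<lambda>q. PiS (length Q) (\<lambda>p. corner (Q!p) (P!q)))" for M
    proof
    assume "M \<in> hom P Q" then show "trp M \<in> PiS (length P) (\<lambda>q. PiS (length Q) (\<lambda>p. corner (Q!p) (P!q)))"
      unfolding hom_def PiS_def trp_def by auto
  next
    assume a: "trp M \<in> PiS (length P) (\<lambda>q. PiS (length Q) (\<lambda>p. corner (Q!p) (P!q)))"
    show "M \<in> hom P Q" unfolding hom_def
    proof (intro CollectI allI)
      fix p q
      show "(p < length Q \<and> q < length P \<longrightarrow> M p q \<in> corner (Q ! p) (P ! q)) \<and>
          (\<not> (p < length Q \<and> q < length P) \<longrightarrow> M p q = 0)"
      proof (cases "q < length P")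
        case True
        then have "trp M q \<in> PiS (length Q) (\<lambda>p. corner (Q!p) (P!q))" using a unfolding PiS_def by auto
        then show ?thesis using True unfolding PiS_def trp_def by auto
      next
        case False
        then have "trp M q = 0" using a unfolding PiS_def by auto
        then show ?thesis using False unfolding trp_def by (auto simp: fun_eq_iff)
      qed
    qed
  qed
  then show ?thesis using trp_image by blast
qed

lemma sum_fun_apply: "(\<Sum>q\<in>A. f q) x = (\<Sum>q\<in>A. f q x)"
  by (induction A rule: infinite_finite_induct) auto

lemma madd_eq: "madd M N = M + N" by (simp add: madd_def fun_eq_iff)

lemma sum_mult_list:
  assumes "set P \<subseteq> {e, e'}" "e \<noteq> e'"
  shows "(\<Sum>q<length P. g (P!q)) = mult e P * g e + mult e' P * g e'"
  using assms(1)
proof (induction P)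
  case Nil then show ?case by (simp add: mult_def)
next
  case (Cons x P)
  have "(\<Sum>q<length (x#P). g ((x#P)!q)) = g x + (\<Sum>q<length P. g (P!q))"
    by (simp only: length_Cons sum.lessThan_Suc_shift nth_Cons_0 nth_Cons_Suc)
  then show ?case using Cons assms(2) by (auto simp: mult_def algebra_simps)
qed

locale fdalg =
  fixes sc :: "'k::field \<Rightarrow> 'a::ring_1 \<Rightarrow> 'a"
  assumes fd: "fd_algebra sc"
begin

abbreviation "vc \<equiv> fsc sc"
abbreviation "vm \<equiv> fsc (fsc sc)"

lemma vsA: "vector_space sc" using fd unfolding fd_algebra_def by blast
lemma vsC: "vector_space vc" by (rule vs_fun[OF vsA])
lemma vsM: "vector_space vm" by (rule vs_fun[OF vsC])
lemma scl: "sc c (x * y) = sc c x * y" using fd unfolding fd_algebra_def by blast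
lemma scr: "sc c (x * y) = x * sc c y" using fd unfolding fd_algebra_def by blast

lemma fspanA: "vector_space.fspan sc S"
proof -
  obtain B where "finite B" "module.span sc B = UNIV" using fd unfolding fd_algebra_def by blast
  then show ?thesis unfolding vector_space.fspan_def[OF vsA] by blast
qed

lemma sc_corner: "x \<in> corner a b \<Longrightarrow> sc c x \<in> corner a b"
proof -
  assume "x \<in> corner a b"
  then obtain u where "x = a * u * b" unfolding corner_iff by blast
  then have "sc c x = a * sc c u * b" using scl scr by simp
  then show "sc c x \<in> corner a b" unfolding corner_iff by blast
qed

lemma corner_subspace: "module.subspace sc (corner a b)"
proof -
  interpret V: vector_space sc by (rule vsA)
  show ?thesis unfolding V.subspace_def by (auto intro: corner_add sc_corner)
qed

lemma col_dims:
  "module.subspace vc (PiS n (\<lambda>p. corner (Q!p) f)) \<and> vector_space.fspan vc (PiS n (\<lambda>p. corner (Q!p) f))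
   \<and> vector_space.dim vc (PiS n (\<lambda>p. corner (Q!p) f)) = (\<Sum>p<n. vector_space.dim sc (corner (Q!p) f))"
  by (rule PiS_dim[OF vsA]) (simp add: corner_subspace fspanA)

lemma linear_trp: "Vector_Spaces.linear vm vm trp"
  unfolding Vector_Spaces.linear_iff using vsM by (auto simp: trp_def fsc_def fun_eq_iff)

lemma PiC_dims:
  assumes "\<forall>q<n. module.subspace vc (S q) \<and> vector_space.fspan vc (S q)"
  shows "module.subspace vm (trp ` PiS n S) \<and> vector_space.fspan vm (trp ` PiS n S)
   \<and> vector_space.dim vm (trp ` PiS n S) = (\<Sum>q<n. vector_space.dim vc (S q))"
proof -
  interpret L: Vector_Spaces.linear vm vm trp by (rule linear_trp)
  have P: "module.subspace vm (PiS n S) \<and> vector_space.fspan vm (PiS n S)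
   \<and> vector_space.dim vm (PiS n S) = (\<Sum>q<n. vector_space.dim vc (S q))"
    by (rule PiS_dim[OF vsC assms])
  have inj: "inj_on trp X" for X by (metis inj_onI trp_trp)
  show ?thesis using linear_image_dims[OF linear_trp, of "PiS n S"] P inj L.subspace_image by auto
qed

lemma hom_dims:
  "module.subspace vm (hom P Q) \<and> vector_space.fspan vm (hom P Q)
   \<and> vector_space.dim vm (hom P Q) = (\<Sum>q<length P. \<Sum>p<length Q. vector_space.dim sc (corner (Q!p) (P!q)))"
  unfolding hom_eq using PiC_dims[of "length P" "\<lambda>q. PiS (length Q) (\<lambda>p. corner (Q!p) (P!q))"] col_dims
  by simp


lemma linear_mulv: "Vector_Spaces.linear vc vc (mulv D n)"
proof -
  interpret A: vector_space sc by (rule vsA)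
  show ?thesis unfolding Vector_Spaces.linear_iff using vsC
    by (auto simp: mulv_def fsc_def fun_eq_iff distrib_left sum.distrib A.scale_sum_right scr)
qed

lemma linear_rmul: "Vector_Spaces.linear vm vm (\<lambda>s. mmul n s D)"
proof -
  interpret A: vector_space sc by (rule vsA)
  show ?thesis unfolding Vector_Spaces.linear_iff using vsM
    by (auto simp: mmul_def fsc_def fun_eq_iff distrib_right sum.distrib A.scale_sum_right scl)
qed

lemma core:
  fixes P1 P0 Q1 Q0 :: "'a list" and e e' :: 'a and dX dY :: "'a mat"
  assumes ee: "e \<noteq> e'"
    and sP1: "set P1 \<subseteq> {e, e'}" and sP0: "set P0 \<subseteq> {e, e'}"
    and sQ1: "set Q1 \<subseteq> {e, e'}" and sQ0: "set Q0 \<subseteq> {e, e'}"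
    and dX: "dX \<in> hom P1 P0" and dY: "dY \<in> hom Q1 Q0"
    and cross: "\<forall>h\<in>hom P1 Q0. \<exists>s\<in>hom P0 Q0. \<exists>t\<in>hom P1 Q1.
                  h = madd (mmul (length P0) s dX) (mmul (length Q1) dY t)"
    and m1: "mult e P0 < mult e P1" and m2: "mult e' P0 = mult e' P1"
    and m3: "mult e Q0 = mult e Q1" and m4: "mult e' Q1 < mult e' Q0"
  shows "corner e' e = {0}"
proof -
  interpret A: vector_space sc by (rule vsA)
  interpret C: vector_space vc by (rule vsC)
  interpret M: vector_space vm by (rule vsM)
  define Cs where "Cs Q f = PiS (length Q) (\<lambda>p. corner (Q!p) f)" for Q :: "'a list" and f
  define I where "I f = mulv dY (length Q1) ` Cs Q1 f" for f
  define Z where "Z P = trp ` PiS (length P) (\<lambda>q. I (P!q))" for P :: "'a list"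
  define L where "L s = mmul (length P0) s dX" for s
  define R where "R t = mmul (length Q1) dY t" for t
  interpret LV: Vector_Spaces.linear vc vc "mulv dY (length Q1)" by (rule linear_mulv)
  have linL: "Vector_Spaces.linear vm vm L" unfolding L_def by (rule linear_rmul)
  interpret LL: Vector_Spaces.linear vm vm L by (rule linL)
  have Cs_d: "C.subspace (Cs Q f) \<and> C.fspan (Cs Q f) \<and> C.dim (Cs Q f) = (\<Sum>p<length Q. A.dim (corner (Q!p) f))"
    for Q f unfolding Cs_def by (rule col_dims)
  have I_d: "C.subspace (I f) \<and> C.fspan (I f) \<and> C.dim (I f) \<le> C.dim (Cs Q1 f)" for f
    using linear_image_dims[OF linear_mulv Cs_d[THEN conjunct2, THEN conjunct1]] Cs_d
      LV.subspace_image unfolding I_def by blast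
  have I_sub: "I f \<subseteq> Cs Q0 f" for f
  proof
    fix v assume "v \<in> I f"
    then obtain c where c: "c \<in> Cs Q1 f" "v = mulv dY (length Q1) c" unfolding I_def by blast
    show "v \<in> Cs Q0 f" unfolding Cs_def PiS_def
    proof (intro CollectI conjI allI impI)
      fix p assume p: "p < length Q0"
      show "v p \<in> corner (Q0 ! p) f" unfolding c mulv_def
      proof (rule corner_sum)
        fix r assume "r \<in> {..<length Q1}"
        then have "dY p r \<in> corner (Q0!p) (Q1!r)" "c r \<in> corner (Q1!r) f"
          using dY c(1) p unfolding hom_def Cs_def PiS_def by auto
        then show "dY p r * c r \<in> corner (Q0 ! p) f" by (rule corner_mul)
      qed
    next
      fix p assume p: "length Q0 \<le> p"
      then have "dY p r = 0" for r using dY unfolding hom_def by auto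
      then show "v p = 0" unfolding c mulv_def by simp
    qed
  qed
  have Z_d: "M.subspace (Z P) \<and> M.fspan (Z P) \<and> M.dim (Z P) = (\<Sum>q<length P. C.dim (I (P!q)))" for P
    unfolding Z_def by (rule PiC_dims) (use I_d in blast)
  have homC: "hom P Q = trp ` PiS (length P) (\<lambda>q. Cs Q (P!q))" for P Q
    unfolding Cs_def by (rule hom_eq)
  have K1: "R t \<in> Z P1" if t: "t \<in> hom P1 Q1" for t
  proof -
    have tt: "trp t \<in> PiS (length P1) (\<lambda>q. Cs Q1 (P1!q))" using t homC trp_image by blast
    have "trp (R t) \<in> PiS (length P1) (\<lambda>q. I (P1!q))" unfolding PiS_def
    proof (intro CollectI conjI allI impI)
      fix q assume q: "q < length P1"
      have "trp (R t) q = mulv dY (length Q1) (trp t q)"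
        unfolding R_def trp_def mulv_def mmul_def by simp
      moreover have "trp t q \<in> Cs Q1 (P1!q)" using tt q unfolding PiS_def by auto
      ultimately show "trp (R t) q \<in> I (P1!q)" unfolding I_def by simp
    next
      fix q assume q: "length P1 \<le> q"
      then have "t r q = 0" for r using t unfolding hom_def by auto
      then show "trp (R t) q = 0" unfolding R_def trp_def mmul_def by (simp add: fun_eq_iff)
    qed
    then show ?thesis unfolding Z_def using trp_image by blast
  qed
  have K2: "L s \<in> Z P1" if s: "s \<in> Z P0" for s
  proof -
    have ss: "trp s \<in> PiS (length P0) (\<lambda>q. I (P0!q))" using s unfolding Z_def using trp_image by blast
    have "trp (L s) \<in> PiS (length P1) (\<lambda>q. I (P1!q))" unfolding PiS_def
    proof (intro CollectI conjI allI impI)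
      fix r assume r: "r < length P1"
      have eq: "trp (L s) r = (\<Sum>q<length P0. (\<lambda>p. trp s q p * dX q r))"
        unfolding L_def trp_def mmul_def by (simp add: fun_eq_iff sum_fun_apply)
      have each: "(\<lambda>p. trp s q p * dX q r) \<in> I (P1!r)" if q: "q < length P0" for q
      proof -
        have "trp s q \<in> I (P0!q)" using ss q unfolding PiS_def by auto
        then obtain c where c: "c \<in> Cs Q1 (P0!q)" "trp s q = mulv dY (length Q1) c" unfolding I_def by blast
        have z: "dX q r \<in> corner (P0!q) (P1!r)" using dX q r unfolding hom_def by auto
        have "(\<lambda>k. c k * dX q r) \<in> Cs Q1 (P1!r)" unfolding Cs_def PiS_def
        proof (intro CollectI conjI allI impI)
          fix k assume "k < length Q1"
          then have "c k \<in> corner (Q1!k) (P0!q)" using c(1) unfolding Cs_def PiS_def by auto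
          then show "c k * dX q r \<in> corner (Q1!k) (P1!r)" using z by (rule corner_mul)
        next
          fix k assume "length Q1 \<le> k"
          then show "c k * dX q r = 0" using c(1) unfolding Cs_def PiS_def by auto
        qed
        moreover have "(\<lambda>p. trp s q p * dX q r) = mulv dY (length Q1) (\<lambda>k. c k * dX q r)"
          unfolding c(2) mulv_def by (simp add: fun_eq_iff sum_distrib_right mult.assoc)
        ultimately show ?thesis unfolding I_def by simp
      qed
      have "(\<Sum>q<length P0. (\<lambda>p. trp s q p * dX q r)) \<in> I (P1!r)"
        by (rule C.subspace_sum[OF I_d[THEN conjunct1]]) (use each in auto)
      then show "trp (L s) r \<in> I (P1!r)" using eq by simp
    next
      fix r assume r: "length P1 \<le> r"
      then have "dX q r = 0" for q using dX unfolding hom_def by auto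
      then show "trp (L s) r = 0" unfolding L_def trp_def mmul_def by (simp add: fun_eq_iff)
    qed
    then show ?thesis unfolding Z_def using trp_image by blast
  qed
  have K3: "Z P0 \<subseteq> hom P0 Q0"
  proof
    fix s assume "s \<in> Z P0"
    then have "trp s \<in> PiS (length P0) (\<lambda>q. I (P0!q))" unfolding Z_def using trp_image by blast
    then have "trp s \<in> PiS (length P0) (\<lambda>q. Cs Q0 (P0!q))" unfolding PiS_def using I_sub by blast
    then show "s \<in> hom P0 Q0" using homC trp_image by blast
  qed
  have HP0: "M.subspace (hom P0 Q0) \<and> M.fspan (hom P0 Q0)" using hom_dims by blast
  obtain b0 where b0: "b0 \<subseteq> Z P0" "M.independent b0" "Z P0 \<subseteq> M.span b0" "finite b0" "card b0 = M.dim (Z P0)"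
    using M.basis_fin Z_d by blast
  obtain b where b: "b0 \<subseteq> b" "b \<subseteq> hom P0 Q0" "M.independent b" "hom P0 Q0 \<subseteq> M.span b"
    using M.maximal_independent_subset_extend[of b0 "hom P0 Q0"] b0 K3 by blast
  have bfin: "finite b \<and> card b \<le> M.dim (hom P0 Q0)"
    using M.card_le_dim_f[OF b(3) b(2)] HP0 by blast
  obtain bZ where bZ: "bZ \<subseteq> Z P1" "M.independent bZ" "Z P1 \<subseteq> M.span bZ" "finite bZ" "card bZ = M.dim (Z P1)"
    using M.basis_fin Z_d by blast
  have cover: "hom P1 Q0 \<subseteq> M.span (L ` (b - b0) \<union> bZ)"
  proof
    fix h assume "h \<in> hom P1 Q0"
    then obtain s t where st: "s \<in> hom P0 Q0" "t \<in> hom P1 Q1" "h = L s + R t"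
      using cross unfolding L_def R_def madd_eq by blast
    have "s \<in> M.span (b0 \<union> (b - b0))" using st(1) b(1,4) by (metis Un_Diff_cancel sup.absorb2 subsetD)
    then obtain x y where xy: "s = x + y" "x \<in> M.span b0" "y \<in> M.span (b - b0)"
      unfolding M.span_Un by blast
    have "M.span b0 \<subseteq> Z P0" using M.span_minimal[OF b0(1)] Z_d by blast
    then have Lx: "L x \<in> M.span (L ` (b - b0) \<union> bZ)"
      using K2 xy(2) bZ(3) M.span_mono[of bZ] by blast
    have "L y \<in> M.span (L ` (b - b0))" using xy(3) LL.span_image by blast
    then have Ly: "L y \<in> M.span (L ` (b - b0) \<union> bZ)" using M.span_mono[of "L ` (b - b0)"] by blast
    have Rt: "R t \<in> M.span (L ` (b - b0) \<union> bZ)"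
      using K1[OF st(2)] bZ(3) M.span_mono[of bZ] by blast
    have "h = L x + L y + R t" using st(3) xy(1) LL.add by simp
    then show "h \<in> M.span (L ` (b - b0) \<union> bZ)" using Lx Ly Rt M.span_add by simp
  qed
  have fin2: "finite (L ` (b - b0) \<union> bZ)" using bfin bZ(4) by blast
  have "M.dim (hom P1 Q0) \<le> card (L ` (b - b0) \<union> bZ)" by (rule M.dim_le_card[OF cover fin2])
  also have "\<dots> \<le> card (L ` (b - b0)) + card bZ" by (rule card_Un_le)
  also have "\<dots> \<le> card (b - b0) + card bZ" using card_image_le[of "b - b0" L] bfin by simp
  also have "card (b - b0) = card b - card b0" using b(1) b0(4) bfin card_Diff_subset by blast
  finally have ineq: "M.dim (hom P1 Q0) + M.dim (Z P0) \<le> M.dim (hom P0 Q0) + M.dim (Z P1)"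
    using bfin b0(5) bZ(5) card_mono[of b b0] b(1) by linarith
  define a where "a f g = A.dim (corner f g)" for f g
  define cQ where "cQ Q f = mult e Q * a e f + mult e' Q * a e' f" for Q f
  have dimCs: "C.dim (Cs Q f) = cQ Q f" if "set Q \<subseteq> {e, e'}" for Q f
    using Cs_d sum_mult_list[OF that ee, of "\<lambda>x. a x f"] unfolding cQ_def a_def by simp
  have dimHom: "M.dim (hom P Q) = mult e P * cQ Q e + mult e' P * cQ Q e'"
    if "set P \<subseteq> {e, e'}" "set Q \<subseteq> {e, e'}" for P Q
  proof -
    have "M.dim (hom P Q) = (\<Sum>q<length P. C.dim (Cs Q (P!q)))"
      using hom_dims Cs_d by simp
    also have "\<dots> = (\<Sum>q<length P. cQ Q (P!q))" using dimCs[OF that(2)] by simp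
    also have "\<dots> = mult e P * cQ Q e + mult e' P * cQ Q e'" by (rule sum_mult_list[OF that(1) ee])
    finally show ?thesis .
  qed
  have dimZ: "M.dim (Z P) = mult e P * C.dim (I e) + mult e' P * C.dim (I e')"
    if "set P \<subseteq> {e, e'}" for P
    using Z_d sum_mult_list[OF that ee, of "\<lambda>x. C.dim (I x)"] by simp
  define u where "u = cQ Q0 e"
  define v where "v = cQ Q0 e'"
  define u' where "u' = C.dim (I e)"
  define v' where "v' = C.dim (I e')"
  have "mult e P1 * u + mult e' P1 * v + (mult e P0 * u' + mult e' P0 * v')
      \<le> mult e P0 * u + mult e' P0 * v + (mult e P1 * u' + mult e' P1 * v')"
    using ineq dimHom[OF sP1 sQ0] dimHom[OF sP0 sQ0] dimZ[OF sP1] dimZ[OF sP0]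
    unfolding u_def v_def u'_def v'_def by simp
  then have ineq2: "mult e P1 * u + mult e P0 * u' \<le> mult e P0 * u + mult e P1 * u'"
    using m2 by simp
  have uu: "u \<le> u'"
  proof (rule ccontr)
    assume "\<not> u \<le> u'"
    then have "u' < u" by simp
    have "int (mult e P0) * int u + int (mult e P1) * int u' < int (mult e P1) * int u + int (mult e P0) * int u'"
    proof -
      have "0 < (int (mult e P1) - int (mult e P0)) * (int u - int u')"
        using m1 \<open>u' < u\<close> by (intro mult_pos_pos) auto
      then show ?thesis by (simp add: algebra_simps)
    qed
    then show False using ineq2 by (metis add.commute of_nat_add of_nat_less_iff of_nat_mult not_le)
  qed
  have "u' \<le> cQ Q1 e" using I_d dimCs[OF sQ1] unfolding u'_def by (metis)
  then have "mult e Q0 * a e e + mult e' Q0 * a e' e \<le> mult e Q1 * a e e + mult e' Q1 * a e' e"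
    using uu unfolding u_def cQ_def by simp
  then have "mult e' Q0 * a e' e \<le> mult e' Q1 * a e' e" using m3 by simp
  then have "a e' e = 0" using m4 by (metis le_zero_eq mult_le_cancel2 not_le)
  then have "corner e' e \<subseteq> {0}" using A.dim_zero_f[OF fspanA] unfolding a_def by blast
  then show ?thesis by auto
qed

end

lemma sum_split: "(\<Sum>k<(m::nat)+n. f k) = (\<Sum>k<m. f k) + (\<Sum>k<n. f (m + k))"
  by (induction n) (auto simp: add.assoc)

definition blk :: "nat \<Rightarrow> nat \<Rightarrow> nat \<Rightarrow> nat \<Rightarrow> 'a::zero mat \<Rightarrow> 'a mat" where
  "blk r0 c0 nr nc M = (\<lambda>p q. if p < nr \<and> q < nc then M (r0 + p) (c0 + q) else 0)"

definition emb :: "nat \<Rightarrow> nat \<Rightarrow> 'a::zero mat \<Rightarrow> 'a mat" where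
  "emb r0 c0 M = (\<lambda>p q. if r0 \<le> p \<and> c0 \<le> q then M (p - r0) (q - c0) else 0)"

lemma mmul_assoc: "mmul n (mmul m A B) C = mmul m A (mmul n B C)"
  unfolding mmul_def
  by (intro ext) (simp add: sum_distrib_left sum_distrib_right mult.assoc sum.swap[where A="{..<n}"])

lemma mmul_add_l: "mmul n (A + B) C = mmul n A C + mmul n B C"
  unfolding mmul_def by (simp add: fun_eq_iff distrib_right sum.distrib)
lemma mmul_add_r: "mmul n A (B + C) = mmul n A B + mmul n A C"
  unfolding mmul_def by (simp add: fun_eq_iff distrib_left sum.distrib)
lemma mmul_diff_l: "mmul n (A - B) C = mmul n A C - mmul n B C"
  unfolding mmul_def by (simp add: fun_eq_iff left_diff_distrib sum_subtractf)
lemma mmul_diff_r: "mmul n A (B - C) = mmul n A B - mmul n A C"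
  unfolding mmul_def by (simp add: fun_eq_iff right_diff_distrib sum_subtractf)
lemma mmul_neg_l: "mmul n (- A) C = - mmul n A C"
  unfolding mmul_def by (simp add: fun_eq_iff sum_negf)
lemma mmul_neg_r: "mmul n A (- C) = - mmul n A C"
  unfolding mmul_def by (simp add: fun_eq_iff sum_negf)
lemma mmul_zero_l[simp]: "mmul n 0 C = 0"
  unfolding mmul_def by (simp add: fun_eq_iff)
lemma mmul_zero_r[simp]: "mmul n A 0 = 0"
  unfolding mmul_def by (simp add: fun_eq_iff)
lemma mmul_zero_l'[simp]: "mmul n (\<lambda>_ _. 0) C = 0"
  unfolding mmul_def by (simp add: fun_eq_iff)
lemma mmul_zero_r'[simp]: "mmul n A (\<lambda>_ _. 0) = 0"
  unfolding mmul_def by (simp add: fun_eq_iff)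
lemma mmul_0[simp]: "mmul 0 A B = 0"
  unfolding mmul_def by (simp add: fun_eq_iff)
lemma msub_eq: "msub M N = M - N" by (simp add: msub_def fun_eq_iff)
lemma madd_eq': "madd M N = M + N" by (simp add: madd_def fun_eq_iff)

lemma corner_iff': "x \<in> corner a b \<longleftrightarrow> (\<exists>u. x = a * u * b)"
  unfolding corner_def by blast

lemma corner_mul': "x \<in> corner a b \<Longrightarrow> y \<in> corner b c \<Longrightarrow> x * y \<in> corner a c"
proof -
  assume "x \<in> corner a b" "y \<in> corner b c"
  then obtain u w where "x = a * u * b" "y = b * w * c" unfolding corner_iff' by blast
  then have "x * y = a * (u * b * b * w) * c" by (simp add: mult.assoc)
  then show ?thesis unfolding corner_iff' by blast
qed

lemma corner_add': "x \<in> corner a b \<Longrightarrow> y \<in> corner a b \<Longrightarrow> x + y \<in> corner a b"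
proof -
  assume "x \<in> corner a b" "y \<in> corner a b"
  then obtain u w where "x = a * u * b" "y = a * w * b" unfolding corner_iff' by blast
  then have "x + y = a * (u + w) * b" by (simp add: distrib_left distrib_right)
  then show ?thesis unfolding corner_iff' by blast
qed

lemma corner_zero'[simp]: "0 \<in> corner a b"
  unfolding corner_iff' by (rule exI[of _ 0]) simp

lemma corner_sum': "(\<And>i. i \<in> I \<Longrightarrow> f i \<in> corner a b) \<Longrightarrow> sum f I \<in> corner a b"
  by (induction I rule: infinite_finite_induct) (auto intro: corner_add')

lemma corner_neg: "x \<in> corner a b \<Longrightarrow> - x \<in> corner a b"
proof -
  assume "x \<in> corner a b"
  then obtain u where "x = a * u * b" unfolding corner_iff' by blast
  then have "- x = a * (- u) * b" by simp
  then show ?thesis unfolding corner_iff' by blast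
qed

lemma corner_left: "idem a \<Longrightarrow> x \<in> corner a b \<Longrightarrow> a * x = x"
  unfolding corner_iff' idem_def by (auto simp: mult.assoc[symmetric])
lemma corner_right: "idem b \<Longrightarrow> x \<in> corner a b \<Longrightarrow> x * b = x"
  unfolding corner_iff' idem_def by (auto simp: mult.assoc)

lemma homD1: "M \<in> hom xs ys \<Longrightarrow> p < length ys \<Longrightarrow> q < length xs \<Longrightarrow> M p q \<in> corner (ys!p) (xs!q)"
  unfolding hom_def by blast
lemma homD2: "M \<in> hom xs ys \<Longrightarrow> \<not> (p < length ys \<and> q < length xs) \<Longrightarrow> M p q = 0"
  unfolding hom_def by blast
lemma homI: "(\<And>p q. p < length ys \<Longrightarrow> q < length xs \<Longrightarrow> M p q \<in> corner (ys!p) (xs!q)) \<Longrightarrow>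
   (\<And>p q. \<not> (p < length ys \<and> q < length xs) \<Longrightarrow> M p q = 0) \<Longrightarrow> M \<in> hom xs ys"
  unfolding hom_def by blast

lemma mmul_hom: "A \<in> hom ys zs \<Longrightarrow> B \<in> hom xs ys \<Longrightarrow> mmul (length ys) A B \<in> hom xs zs"
proof (rule homI)
  fix p q assume A: "A \<in> hom ys zs" and B: "B \<in> hom xs ys" and pq: "p < length zs" "q < length xs"
  show "mmul (length ys) A B p q \<in> corner (zs ! p) (xs ! q)"
    unfolding mmul_def by (rule corner_sum') (use A B pq in \<open>auto intro: corner_mul' homD1\<close>)
next
  fix p q assume A: "A \<in> hom ys zs" and B: "B \<in> hom xs ys" and pq: "\<not> (p < length zs \<and> q < length xs)"
  then show "mmul (length ys) A B p q = 0" unfolding mmul_def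
    by (cases "p < length zs") (auto simp: homD2)
qed

lemma hom_add: "A \<in> hom xs ys \<Longrightarrow> B \<in> hom xs ys \<Longrightarrow> A + B \<in> hom xs ys"
  by (rule homI) (auto intro: corner_add' homD1 simp: homD2)
lemma hom_neg: "A \<in> hom xs ys \<Longrightarrow> - A \<in> hom xs ys"
  by (rule homI) (auto intro: corner_neg homD1 simp: homD2)
lemma hom_zero[simp]: "0 \<in> hom xs ys"
  by (rule homI) auto
lemma hom_zero'[simp]: "(\<lambda>_ _. 0) \<in> hom xs ys"
  by (rule homI) auto

lemma idm_hom: "(\<forall>x\<in>set xs. idem x) \<Longrightarrow> idm xs \<in> hom xs xs"
proof (rule homI)
  fix p q assume i: "\<forall>x\<in>set xs. idem x" and pq: "p < length xs" "q < length xs"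
  show "idm xs p q \<in> corner (xs ! p) (xs ! q)"
  proof (cases "p = q")
    case True
    then have "idm xs p q = xs!p * 1 * xs!p" using i pq unfolding idm_def idem_def by auto
    then show ?thesis using True unfolding corner_iff' by blast
  qed (simp add: idm_def)
qed (auto simp: idm_def)

lemma idm_left: "(\<forall>x\<in>set ys. idem x) \<Longrightarrow> M \<in> hom xs ys \<Longrightarrow> mmul (length ys) (idm ys) M = M"
proof -
  assume i: "\<forall>x\<in>set ys. idem x" and M: "M \<in> hom xs ys"
  have "mmul (length ys) (idm ys) M p q = M p q" for p q
  proof (cases "p < length ys")
    case True
    have "mmul (length ys) (idm ys) M p q = (\<Sum>k<length ys. (if k = p then ys!p * M p q else 0))"
      unfolding mmul_def idm_def by (rule sum.cong) auto
    also have "\<dots> = ys!p * M p q" using True by simp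
    also have "\<dots> = M p q"
    proof (cases "q < length xs")
      case True
      then show ?thesis using \<open>p < length ys\<close> i M by (auto intro: corner_left homD1)
    next
      case False then show ?thesis using M by (simp add: homD2)
    qed
    finally show ?thesis .
  next
    case False then show ?thesis using M unfolding mmul_def idm_def by (simp add: homD2)
  qed
  then show ?thesis by (simp add: fun_eq_iff)
qed

lemma idm_right: "(\<forall>x\<in>set xs. idem x) \<Longrightarrow> M \<in> hom xs ys \<Longrightarrow> mmul (length xs) M (idm xs) = M"
proof -
  assume i: "\<forall>x\<in>set xs. idem x" and M: "M \<in> hom xs ys"
  have "mmul (length xs) M (idm xs) p q = M p q" for p q
  proof (cases "q < length xs")
    case True
    have "mmul (length xs) M (idm xs) p q = (\<Sum>k<length xs. (if k = q then M p q * xs!q else 0))"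
      unfolding mmul_def idm_def by (rule sum.cong) auto
    also have "\<dots> = M p q * xs!q" using True by simp
    also have "\<dots> = M p q"
    proof (cases "p < length ys")
      case True
      then show ?thesis using \<open>q < length xs\<close> i M by (auto intro: corner_right homD1)
    next
      case False then show ?thesis using M by (simp add: homD2)
    qed
    finally show ?thesis .
  next
    case False then show ?thesis using M unfolding mmul_def idm_def by (simp add: homD2)
  qed
  then show ?thesis by (simp add: fun_eq_iff)
qed

lemma blk_mmul:
  assumes "i0 + n \<le> N"
    and "\<And>p q k. p < nr \<Longrightarrow> q < nc \<Longrightarrow> k < N \<Longrightarrow> k < i0 \<or> i0 + n \<le> k \<Longrightarrow> A (r0+p) k * B k (c0+q) = 0"
  shows "blk r0 c0 nr nc (mmul N A B) = mmul n (blk r0 i0 nr n A) (blk i0 c0 n nc B)"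
proof -
  have "blk r0 c0 nr nc (mmul N A B) p q = mmul n (blk r0 i0 nr n A) (blk i0 c0 n nc B) p q" for p q
  proof (cases "p < nr \<and> q < nc")
    case True
    define f where "f k = A (r0+p) k * B k (c0+q)" for k
    obtain j where N: "N = i0 + n + j" using assms(1) le_Suc_ex by blast
    have "mmul N A B (r0+p) (c0+q) = (\<Sum>k<i0. f k) + (\<Sum>k<n. f (i0 + k)) + (\<Sum>k<j. f (i0 + n + k))"
      unfolding mmul_def f_def N sum_split by simp
    also have "(\<Sum>k<i0. f k) = 0" using assms(2) True N unfolding f_def by (intro sum.neutral) auto
    also have "(\<Sum>k<j. f (i0 + n + k)) = 0" using assms(2) True N unfolding f_def by (intro sum.neutral) auto
    finally show ?thesis using True unfolding blk_def mmul_def f_def by simp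
  next
    case False then show ?thesis unfolding blk_def mmul_def by auto
  qed
  then show ?thesis by (simp add: fun_eq_iff)
qed

lemma blk_add: "blk r0 c0 nr nc (A + B :: 'a::ring_1 mat) = blk r0 c0 nr nc A + blk r0 c0 nr nc B"
  unfolding blk_def by (intro ext) simp
lemma blk_diff: "blk r0 c0 nr nc (A - B :: 'a::ring_1 mat) = blk r0 c0 nr nc A - blk r0 c0 nr nc B"
  unfolding blk_def by (intro ext) simp
lemma blk_neg: "blk r0 c0 nr nc (- A :: 'a::ring_1 mat) = - blk r0 c0 nr nc A"
  unfolding blk_def by (intro ext) simp
lemma blk_zero[simp]: "blk r0 c0 nr nc (0 :: 'a::ring_1 mat) = 0"
  unfolding blk_def by (intro ext) simp

lemma blk_id: "M \<in> hom xs ys \<Longrightarrow> blk 0 0 (length ys) (length xs) M = M"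
  unfolding blk_def by (auto simp: fun_eq_iff homD2)

lemma blk_emb: "M \<in> hom xs ys \<Longrightarrow> blk r0 c0 (length ys) (length xs) (emb r0 c0 M) = M"
  unfolding blk_def emb_def by (auto simp: fun_eq_iff homD2)

lemma blk_hom:
  assumes M: "M \<in> hom xs ys"
    and r: "\<And>p. p < length ys' \<Longrightarrow> r0 + p < length ys \<and> ys!(r0+p) = ys'!p"
    and c: "\<And>q. q < length xs' \<Longrightarrow> c0 + q < length xs \<and> xs!(c0+q) = xs'!q"
  shows "blk r0 c0 (length ys') (length xs') M \<in> hom xs' ys'"
proof (rule homI)
  fix p q assume pq: "p < length ys'" "q < length xs'"
  then have "M (r0+p) (c0+q) \<in> corner (ys!(r0+p)) (xs!(c0+q))" using homD1[OF M] r c by blast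
  then show "blk r0 c0 (length ys') (length xs') M p q \<in> corner (ys' ! p) (xs' ! q)"
    using pq r c unfolding blk_def by simp
qed (auto simp: blk_def)

lemma emb_hom:
  assumes M: "M \<in> hom xs ys"
    and r: "\<And>p. p < length ys \<Longrightarrow> r0 + p < length ys' \<and> ys'!(r0+p) = ys!p"
    and c: "\<And>q. q < length xs \<Longrightarrow> c0 + q < length xs' \<and> xs'!(c0+q) = xs!q"
  shows "emb r0 c0 M \<in> hom xs' ys'"
proof (rule homI)
  fix p q assume pq: "p < length ys'" "q < length xs'"
  show "emb r0 c0 M p q \<in> corner (ys' ! p) (xs' ! q)"
  proof (cases "r0 \<le> p \<and> c0 \<le> q \<and> p - r0 < length ys \<and> q - c0 < length xs")
    case True
    then show ?thesis using homD1[OF M, of "p - r0" "q - c0"] r[of "p - r0"] c[of "q - c0"]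
      unfolding emb_def by auto
  next
    case False
    then show ?thesis unfolding emb_def using homD2[OF M] by auto
  qed
next
  fix p q assume pq: "\<not> (p < length ys' \<and> q < length xs')"
  show "emb r0 c0 M p q = 0"
  proof (cases "r0 \<le> p \<and> c0 \<le> q")
    case True
    have "\<not> (p - r0 < length ys \<and> q - c0 < length xs)"
      using pq r[of "p - r0"] c[of "q - c0"] True by auto
    then show ?thesis unfolding emb_def using homD2[OF M] True by auto
  qed (auto simp: emb_def)
qed

definition wfc :: "'a::ring_1 cx \<Rightarrow> bool" where "wfc T \<longleftrightarrow> dif T \<in> hom (src T) (tgt T)"

definition cross :: "'a::ring_1 cx \<Rightarrow> 'a cx \<Rightarrow> bool" where
  "cross X Y \<longleftrightarrow> (\<forall>h\<in>hom (src X) (tgt Y). \<exists>s\<in>hom (tgt X) (tgt Y). \<exists>t\<in>hom (src X) (src Y).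
      h = madd (mmul (length (tgt X)) s (dif X)) (mmul (length (src Y)) (dif Y) t))"

lemma presilting_cross: "presilting T = cross T T"
  unfolding presilting_def cross_def ..

lemma dsum_simps[simp]: "src (dsum U V) = src U @ src V" "tgt (dsum U V) = tgt U @ tgt V"
  unfolding dsum_def src_def tgt_def by simp_all

lemma dsum_dif: "dif (dsum U V) p q = (if p < length (tgt U) then (if q < length (src U) then dif U p q else 0)
           else (if q < length (src U) then 0
                 else dif V (p - length (tgt U)) (q - length (src U))))"
  unfolding dsum_def src_def tgt_def dif_def by simp

lemma wfc_zero: "wfc (zero_cx :: 'a::ring_1 cx)"
  unfolding wfc_def zero_cx_def src_def tgt_def dif_def by simp

lemma wfc_dsum: assumes U: "wfc U" and V: "wfc V" shows "wfc (dsum U V)"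
  unfolding wfc_def
proof (rule homI)
  fix p q assume pq: "p < length (tgt (dsum U V))" "q < length (src (dsum U V))"
  show "dif (dsum U V) p q \<in> corner (tgt (dsum U V) ! p) (src (dsum U V) ! q)"
  proof (cases "p < length (tgt U)")
    case True
    then show ?thesis using homD1[OF U[unfolded wfc_def], of p q] pq
      by (auto simp: dsum_dif nth_append)
  next
    case False
    then show ?thesis using homD1[OF V[unfolded wfc_def], of "p - length (tgt U)" "q - length (src U)"] pq
      by (auto simp: dsum_dif nth_append)
  qed
next
  fix p q assume pq: "\<not> (p < length (tgt (dsum U V)) \<and> q < length (src (dsum U V)))"
  show "dif (dsum U V) p q = 0"
  proof (cases "p < length (tgt U)")
    case True
    then show ?thesis using pq homD2[OF U[unfolded wfc_def], of p q] by (auto simp: dsum_dif)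
  next
    case False
    then have "\<not> (p - length (tgt U) < length (tgt V) \<and> q - length (src U) < length (src V)) \<or> q < length (src U)"
      using pq by auto
    then show ?thesis using False homD2[OF V[unfolded wfc_def], of "p - length (tgt U)" "q - length (src U)"]
      by (auto simp: dsum_dif)
  qed
qed

lemma emb00[simp]: "emb 0 0 M = M" unfolding emb_def by simp

lemma hom_ext_r: "h \<in> hom xs ys \<Longrightarrow> h \<in> hom xs (ys @ zs)"
  using emb_hom[of h xs ys 0 "ys @ zs" 0 xs] by (simp add: nth_append)
lemma hom_ext_c: "h \<in> hom xs ys \<Longrightarrow> h \<in> hom (xs @ zs) ys"
  using emb_hom[of h xs ys 0 ys 0 "xs @ zs"] by (simp add: nth_append)
lemma hom_shift_r: "h \<in> hom xs zs \<Longrightarrow> emb (length ys) 0 h \<in> hom xs (ys @ zs)"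
  using emb_hom[of h xs zs "length ys" "ys @ zs" 0 xs] by (simp add: nth_append)
lemma hom_shift_c: "h \<in> hom zs ys \<Longrightarrow> emb 0 (length xs) h \<in> hom (xs @ zs) ys"
  using emb_hom[of h zs ys 0 ys "length xs" "xs @ zs"] by (simp add: nth_append)

lemma blk_first_r: "s \<in> hom xs (ys @ zs) \<Longrightarrow> blk 0 0 (length ys) (length xs) s \<in> hom xs ys"
  using blk_hom[of s xs "ys@zs" ys 0 xs 0]
  by (auto simp: nth_append)
lemma blk_second_r: "s \<in> hom xs (ys @ zs) \<Longrightarrow> blk (length ys) 0 (length zs) (length xs) s \<in> hom xs zs"
  by (rule blk_hom) (auto simp: nth_append)
lemma blk_first_c: "s \<in> hom (xs @ zs) ys \<Longrightarrow> blk 0 0 (length ys) (length xs) s \<in> hom xs ys"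
  using blk_hom[of s "xs@zs" ys ys 0 xs 0]
  by (auto simp: nth_append)
lemma blk_second_c: "s \<in> hom (xs @ zs) ys \<Longrightarrow> blk 0 (length xs) (length ys) (length zs) s \<in> hom zs ys"
  by (rule blk_hom) (auto simp: nth_append)

lemma dsum_blkU: "wfc U \<Longrightarrow> blk 0 0 (length (tgt U)) (length (src U)) (dif (dsum U V)) = dif U"
  unfolding wfc_def blk_def by (auto simp: fun_eq_iff dsum_dif homD2)
lemma dsum_blkV: "wfc V \<Longrightarrow> blk (length (tgt U)) (length (src U)) (length (tgt V)) (length (src V)) (dif (dsum U V)) = dif V"
  unfolding wfc_def blk_def by (auto simp: fun_eq_iff dsum_dif homD2)

lemma cross_right:
  assumes X: "wfc X" and Y: "wfc Y" and Z: "wfc Z" and c: "cross X (dsum Y Z)"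
  shows "cross X Y \<and> cross X Z"
proof -
  let ?W = "dsum Y Z"
  let ?lt = "length (tgt X)" and ?ls = "length (src X)"
  let ?mY = "length (tgt Y)" and ?kY = "length (src Y)" and ?mZ = "length (tgt Z)" and ?kZ = "length (src Z)"
  have dX: "blk 0 0 ?lt ?ls (dif X) = dif X" using X unfolding wfc_def by (rule blk_id)
  have "cross X Y" unfolding cross_def
  proof
    fix h assume h: "h \<in> hom (src X) (tgt Y)"
    then have "h \<in> hom (src X) (tgt ?W)" by (simp add: hom_ext_r)
    then obtain s t where s: "s \<in> hom (tgt X) (tgt Y @ tgt Z)" and t: "t \<in> hom (src X) (src Y @ src Z)"
      and eq: "h = madd (mmul ?lt s (dif X)) (mmul (?kY + ?kZ) (dif ?W) t)"
      using c unfolding cross_def by auto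
    have "h = blk 0 0 ?mY ?ls h" using blk_id[OF h] by simp
    also have "\<dots> = blk 0 0 ?mY ?ls (mmul ?lt s (dif X)) + blk 0 0 ?mY ?ls (mmul (?kY + ?kZ) (dif ?W) t)"
      unfolding eq madd_eq' blk_add ..
    also have "blk 0 0 ?mY ?ls (mmul ?lt s (dif X)) = mmul ?lt (blk 0 0 ?mY ?lt s) (blk 0 0 ?lt ?ls (dif X))"
      by (rule blk_mmul) auto
    also have "blk 0 0 ?mY ?ls (mmul (?kY + ?kZ) (dif ?W) t) = mmul ?kY (blk 0 0 ?mY ?kY (dif ?W)) (blk 0 0 ?kY ?ls t)"
      by (rule blk_mmul) (auto simp: dsum_dif)
    finally have "h = madd (mmul ?lt (blk 0 0 ?mY ?lt s) (dif X)) (mmul ?kY (dif Y) (blk 0 0 ?kY ?ls t))"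
      using dX dsum_blkU[OF Y] madd_eq' by metis
    moreover have "blk 0 0 ?mY ?lt s \<in> hom (tgt X) (tgt Y)" by (rule blk_first_r[OF s])
    moreover have "blk 0 0 ?kY ?ls t \<in> hom (src X) (src Y)" by (rule blk_first_r[OF t])
    ultimately show "\<exists>s\<in>hom (tgt X) (tgt Y). \<exists>t\<in>hom (src X) (src Y).
      h = madd (mmul ?lt s (dif X)) (mmul ?kY (dif Y) t)" by blast
  qed
  moreover have "cross X Z" unfolding cross_def
  proof
    fix h assume h: "h \<in> hom (src X) (tgt Z)"
    then have "emb ?mY 0 h \<in> hom (src X) (tgt ?W)" by (simp add: hom_shift_r)
    then obtain s t where s: "s \<in> hom (tgt X) (tgt Y @ tgt Z)" and t: "t \<in> hom (src X) (src Y @ src Z)"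
      and eq: "emb ?mY 0 h = madd (mmul ?lt s (dif X)) (mmul (?kY + ?kZ) (dif ?W) t)"
      using c unfolding cross_def by auto
    have "h = blk ?mY 0 ?mZ ?ls (emb ?mY 0 h)" using blk_emb[OF h] by simp
    also have "\<dots> = blk ?mY 0 ?mZ ?ls (mmul ?lt s (dif X)) + blk ?mY 0 ?mZ ?ls (mmul (?kY + ?kZ) (dif ?W) t)"
      unfolding eq madd_eq' blk_add ..
    also have "blk ?mY 0 ?mZ ?ls (mmul ?lt s (dif X)) = mmul ?lt (blk ?mY 0 ?mZ ?lt s) (blk 0 0 ?lt ?ls (dif X))"
      by (rule blk_mmul) auto
    also have "blk ?mY 0 ?mZ ?ls (mmul (?kY + ?kZ) (dif ?W) t) = mmul ?kZ (blk ?mY ?kY ?mZ ?kZ (dif ?W)) (blk ?kY 0 ?kZ ?ls t)"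
      by (rule blk_mmul) (auto simp: dsum_dif)
    finally have "h = madd (mmul ?lt (blk ?mY 0 ?mZ ?lt s) (dif X)) (mmul ?kZ (dif Z) (blk ?kY 0 ?kZ ?ls t))"
      using dX dsum_blkV[OF Z] madd_eq' by metis
    moreover have "blk ?mY 0 ?mZ ?lt s \<in> hom (tgt X) (tgt Z)" by (rule blk_second_r[OF s])
    moreover have "blk ?kY 0 ?kZ ?ls t \<in> hom (src X) (src Z)" by (rule blk_second_r[OF t])
    ultimately show "\<exists>s\<in>hom (tgt X) (tgt Z). \<exists>t\<in>hom (src X) (src Z).
      h = madd (mmul ?lt s (dif X)) (mmul ?kZ (dif Z) t)" by blast
  qed
  ultimately show ?thesis ..
qed

lemma cross_left:
  assumes X1: "wfc X1" and X2: "wfc X2" and Y: "wfc Y" and c: "cross (dsum X1 X2) Y"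
  shows "cross X1 Y \<and> cross X2 Y"
proof -
  let ?X = "dsum X1 X2"
  let ?mY = "length (tgt Y)" and ?kY = "length (src Y)"
  let ?m1 = "length (tgt X1)" and ?k1 = "length (src X1)" and ?m2 = "length (tgt X2)" and ?k2 = "length (src X2)"
  have dY: "blk 0 0 ?mY ?kY (dif Y) = dif Y" using Y unfolding wfc_def by (rule blk_id)
  have "cross X1 Y" unfolding cross_def
  proof
    fix h assume h: "h \<in> hom (src X1) (tgt Y)"
    then have "h \<in> hom (src ?X) (tgt Y)" by (simp add: hom_ext_c)
    then obtain s t where s: "s \<in> hom (tgt X1 @ tgt X2) (tgt Y)" and t: "t \<in> hom (src X1 @ src X2) (src Y)"
      and eq: "h = madd (mmul (?m1 + ?m2) s (dif ?X)) (mmul ?kY (dif Y) t)"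
      using c unfolding cross_def by auto
    have "h = blk 0 0 ?mY ?k1 h" using blk_id[OF h] by simp
    also have "\<dots> = blk 0 0 ?mY ?k1 (mmul (?m1 + ?m2) s (dif ?X)) + blk 0 0 ?mY ?k1 (mmul ?kY (dif Y) t)"
      unfolding eq madd_eq' blk_add ..
    also have "blk 0 0 ?mY ?k1 (mmul (?m1 + ?m2) s (dif ?X)) = mmul ?m1 (blk 0 0 ?mY ?m1 s) (blk 0 0 ?m1 ?k1 (dif ?X))"
      by (rule blk_mmul) (auto simp: dsum_dif)
    also have "blk 0 0 ?mY ?k1 (mmul ?kY (dif Y) t) = mmul ?kY (blk 0 0 ?mY ?kY (dif Y)) (blk 0 0 ?kY ?k1 t)"
      by (rule blk_mmul) auto
    finally have "h = madd (mmul ?m1 (blk 0 0 ?mY ?m1 s) (dif X1)) (mmul ?kY (dif Y) (blk 0 0 ?kY ?k1 t))"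
      using dY dsum_blkU[OF X1] madd_eq' by metis
    moreover have "blk 0 0 ?mY ?m1 s \<in> hom (tgt X1) (tgt Y)" by (rule blk_first_c[OF s])
    moreover have "blk 0 0 ?kY ?k1 t \<in> hom (src X1) (src Y)" by (rule blk_first_c[OF t])
    ultimately show "\<exists>s\<in>hom (tgt X1) (tgt Y). \<exists>t\<in>hom (src X1) (src Y).
      h = madd (mmul ?m1 s (dif X1)) (mmul ?kY (dif Y) t)" by blast
  qed
  moreover have "cross X2 Y" unfolding cross_def
  proof
    fix h assume h: "h \<in> hom (src X2) (tgt Y)"
    then have "emb 0 ?k1 h \<in> hom (src ?X) (tgt Y)" by (simp add: hom_shift_c)
    then obtain s t where s: "s \<in> hom (tgt X1 @ tgt X2) (tgt Y)" and t: "t \<in> hom (src X1 @ src X2) (src Y)"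
      and eq: "emb 0 ?k1 h = madd (mmul (?m1 + ?m2) s (dif ?X)) (mmul ?kY (dif Y) t)"
      using c unfolding cross_def by auto
    have "h = blk 0 ?k1 ?mY ?k2 (emb 0 ?k1 h)" using blk_emb[OF h] by simp
    also have "\<dots> = blk 0 ?k1 ?mY ?k2 (mmul (?m1 + ?m2) s (dif ?X)) + blk 0 ?k1 ?mY ?k2 (mmul ?kY (dif Y) t)"
      unfolding eq madd_eq' blk_add ..
    also have "blk 0 ?k1 ?mY ?k2 (mmul (?m1 + ?m2) s (dif ?X)) = mmul ?m2 (blk 0 ?m1 ?mY ?m2 s) (blk ?m1 ?k1 ?m2 ?k2 (dif ?X))"
      by (rule blk_mmul) (auto simp: dsum_dif)
    also have "blk 0 ?k1 ?mY ?k2 (mmul ?kY (dif Y) t) = mmul ?kY (blk 0 0 ?mY ?kY (dif Y)) (blk 0 ?k1 ?kY ?k2 t)"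
      by (rule blk_mmul) auto
    finally have "h = madd (mmul ?m2 (blk 0 ?m1 ?mY ?m2 s) (dif X2)) (mmul ?kY (dif Y) (blk 0 ?k1 ?kY ?k2 t))"
      using dY dsum_blkV[OF X2] madd_eq' by metis
    moreover have "blk 0 ?m1 ?mY ?m2 s \<in> hom (tgt X2) (tgt Y)" by (rule blk_second_c[OF s])
    moreover have "blk 0 ?k1 ?kY ?k2 t \<in> hom (src X2) (src Y)" by (rule blk_second_c[OF t])
    ultimately show "\<exists>s\<in>hom (tgt X2) (tgt Y). \<exists>t\<in>hom (src X2) (src Y).
      h = madd (mmul ?m2 s (dif X2)) (mmul ?kY (dif Y) t)" by blast
  qed
  ultimately show ?thesis ..
qed

lemma wfc_foldr: "(\<forall>T\<in>set Ts. wfc T) \<Longrightarrow> wfc (foldr dsum Ts zero_cx)"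
  by (induction Ts) (auto simp: wfc_zero wfc_dsum)

lemma cross_foldr_r: "(\<forall>T\<in>set Ts. wfc T) \<Longrightarrow> wfc X \<Longrightarrow> cross X (foldr dsum Ts zero_cx) \<Longrightarrow> T \<in> set Ts \<Longrightarrow> cross X T"
proof (induction Ts)
  case (Cons T0 Ts)
  then have "cross X T0 \<and> cross X (foldr dsum Ts zero_cx)"
    using cross_right[of X T0 "foldr dsum Ts zero_cx"] wfc_foldr by auto
  then show ?case using Cons by auto
qed simp

lemma cross_foldr_l: "(\<forall>T\<in>set Ts. wfc T) \<Longrightarrow> wfc Y \<Longrightarrow> cross (foldr dsum Ts zero_cx) Y \<Longrightarrow> T \<in> set Ts \<Longrightarrow> cross T Y"
proof (induction Ts)
  case (Cons T0 Ts)
  then have "cross T0 Y \<and> cross (foldr dsum Ts zero_cx) Y"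
    using cross_left[of T0 "foldr dsum Ts zero_cx" Y] wfc_foldr by auto
  then show ?case using Cons by auto
qed simp

lemma presilting_pairs:
  assumes "\<forall>T\<in>set Ts. wfc T" "presilting (foldr dsum Ts zero_cx)" "T \<in> set Ts" "T' \<in> set Ts"
  shows "cross T T'"
proof -
  have "cross (foldr dsum Ts zero_cx) T'"
    using cross_foldr_r[OF assms(1) wfc_foldr[OF assms(1)]] assms(2,4) presilting_cross by blast
  then show ?thesis using cross_foldr_l[OF assms(1)] assms(1,3,4) by blast
qed

lemma zero_cx_simps[simp]: "src (zero_cx :: 'a::ring_1 cx) = []" "tgt (zero_cx :: 'a::ring_1 cx) = []"
  "dif (zero_cx :: 'a::ring_1 cx) = (\<lambda>_ _. 0)"
  unfolding zero_cx_def src_def tgt_def dif_def by simp_all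

lemma idm_Nil[simp]: "idm [] = (0 :: 'a::ring_1 mat)"
  unfolding idm_def by (simp add: fun_eq_iff)

lemma contractible_zero:
  assumes h: "h \<in> hom (tgt U) (src U)"
    and e1: "mmul (length (tgt U)) h (dif U) = idm (src U)"
    and e2: "mmul (length (src U)) (dif U) h = idm (tgt U)"
  shows "is_zero U"
  unfolding is_zero_def kiso_def
proof (intro exI conjI)
  show "chain_map U zero_cx (0, 0)" unfolding chain_map_def by simp
  show "chain_map zero_cx U (0, 0)" unfolding chain_map_def by simp
  show "null_htp U U (cm_sub (cm_comp zero_cx (0, 0) (0, 0)) (cm_id U))"
    unfolding null_htp_def cm_sub_def cm_comp_def cm_id_def msub_eq
    by (rule bexI[of _ "- h"]) (use h e1 e2 hom_neg in \<open>auto simp: mmul_neg_l mmul_neg_r\<close>)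
  show "null_htp zero_cx zero_cx (cm_sub (cm_comp U (0, 0) (0, 0)) (cm_id zero_cx))"
    unfolding null_htp_def cm_sub_def cm_comp_def cm_id_def msub_eq
    by (rule bexI[of _ 0]) auto
qed

lemma idem_entries: "\<forall>x\<in>set xs. idem x \<Longrightarrow> M \<in> hom [e] [e] \<Longrightarrow> mmul 1 M M 0 0 = M 0 0 * M 0 0"
  unfolding mmul_def by simp

lemma contract1:
  assumes iS: "\<forall>x\<in>set (src U). idem x" and iT: "\<forall>x\<in>set (tgt U). idem x" and ie: "idem e"
    and dU: "dif U \<in> hom (src U) (tgt U)"
    and a: "a \<in> hom [e] (src U)" and b: "b \<in> hom (src U) [e]" and H: "H \<in> hom (tgt U) (src U)"
    and F1: "mmul (length (src U)) (dif U) a = 0"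
    and F2: "mmul 1 a b = idm (src U) + mmul (length (tgt U)) H (dif U)"
    and F3: "mmul (length (src U)) (dif U) H = - idm (tgt U)"
  shows "mmul (length (src U)) b a 0 0 * mmul (length (src U)) b a 0 0 = mmul (length (src U)) b a 0 0
    \<and> mmul (length (src U)) b a 0 0 \<in> corner e e
    \<and> (mmul (length (src U)) b a 0 0 = 0 \<longrightarrow> is_zero U)"
proof -
  let ?k = "length (src U)" and ?m = "length (tgt U)" and ?d = "dif U"
  define X where "X = mmul ?k b a"
  have Xh: "X \<in> hom [e] [e]" unfolding X_def by (rule mmul_hom[OF b a])
  have Ia: "mmul ?k (idm (src U)) a = a" by (rule idm_left[OF iS a])
  have XX: "mmul 1 X X = X"
  proof -
    have "mmul 1 X X = mmul ?k b (mmul ?k (mmul 1 a b) a)"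
      unfolding X_def by (simp add: mmul_assoc)
    also have "\<dots> = mmul ?k b (a + mmul ?m H (mmul ?k ?d a))"
      unfolding F2 mmul_add_l Ia by (simp add: mmul_assoc)
    also have "\<dots> = X" unfolding F1 X_def by simp
    finally show ?thesis .
  qed
  have x1: "X 0 0 * X 0 0 = X 0 0" using fun_cong[OF fun_cong[OF XX, of 0], of 0] unfolding mmul_def by simp
  have x2: "X 0 0 \<in> corner e e" using homD1[OF Xh, of 0 0] by simp
  have x3: "is_zero U" if x0: "X 0 0 = 0"
  proof -
    have X0: "X = 0"
    proof (rule ext, rule ext)
      fix p q show "X p q = 0 p q"
        using x0 homD2[OF Xh, of p q] by (cases "p = 0 \<and> q = 0") auto
    qed
    define \<phi> where "\<phi> = mmul 1 a b"
    have Hd: "mmul ?m H ?d \<in> hom (src U) (src U)" by (rule mmul_hom[OF H dU])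
    have Is: "idm (src U) \<in> hom (src U) (src U)" by (rule idm_hom[OF iS])
    have ph0: "mmul ?k \<phi> \<phi> = 0"
    proof -
      have "mmul ?k \<phi> \<phi> = mmul 1 a (mmul 1 X b)" unfolding \<phi>_def X_def by (simp add: mmul_assoc)
      then show ?thesis using X0 by simp
    qed
    have HdHd: "mmul ?k (mmul ?m H ?d) (mmul ?m H ?d) = - mmul ?m H ?d"
    proof -
      have "mmul ?k (mmul ?m H ?d) (mmul ?m H ?d) = mmul ?m H (mmul ?m (mmul ?k ?d H) ?d)"
        by (simp add: mmul_assoc)
      also have "\<dots> = mmul ?m H (- mmul ?m (idm (tgt U)) ?d)" unfolding F3 mmul_neg_l ..
      also have "\<dots> = - mmul ?m H ?d" using idm_left[OF iT dU] by (simp add: mmul_neg_r)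
      finally show ?thesis .
    qed
    have eq1: "mmul ?k \<phi> \<phi> = mmul ?k (idm (src U)) \<phi> + mmul ?k (mmul ?m H ?d) (idm (src U))
          + mmul ?k (mmul ?m H ?d) (mmul ?m H ?d)"
      unfolding \<phi>_def F2 mmul_add_l mmul_add_r by (simp add: add.assoc)
    have i1: "mmul ?k (idm (src U)) \<phi> = \<phi>" unfolding \<phi>_def F2
      by (rule idm_left[OF iS hom_add[OF Is Hd]])
    have i2: "mmul ?k (mmul ?m H ?d) (idm (src U)) = mmul ?m H ?d" by (rule idm_right[OF iS Hd])
    have "mmul ?k \<phi> \<phi> = \<phi> + mmul ?m H ?d + - mmul ?m H ?d" unfolding eq1 i1 i2 HdHd ..
    then have "mmul ?k \<phi> \<phi> = \<phi>" by simp
    then have "idm (src U) + mmul ?m H ?d = 0" using ph0 unfolding \<phi>_def F2 by simp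
    then have c1: "mmul ?m (- H) ?d = idm (src U)" by (simp add: mmul_neg_l add_eq_0_iff)
    have c2: "mmul ?k ?d (- H) = idm (tgt U)" using F3 by (simp add: mmul_neg_r)
    show ?thesis by (rule contractible_zero[OF hom_neg[OF H] c1 c2])
  qed
  show ?thesis using x1 x2 x3 unfolding X_def by blast
qed

lemma contract2:
  assumes iS: "\<forall>x\<in>set (src U). idem x" and iT: "\<forall>x\<in>set (tgt U). idem x" and ie: "idem e"
    and dU: "dif U \<in> hom (src U) (tgt U)"
    and a: "a \<in> hom [e] (tgt U)" and b: "b \<in> hom (tgt U) [e]" and H: "H \<in> hom (tgt U) (src U)"
    and G1: "mmul (length (tgt U)) b (dif U) = 0"
    and G2: "mmul 1 a b = idm (tgt U) + mmul (length (src U)) (dif U) H"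
    and G3: "mmul (length (tgt U)) H (dif U) = - idm (src U)"
  shows "mmul (length (tgt U)) b a 0 0 * mmul (length (tgt U)) b a 0 0 = mmul (length (tgt U)) b a 0 0
    \<and> mmul (length (tgt U)) b a 0 0 \<in> corner e e
    \<and> (mmul (length (tgt U)) b a 0 0 = 0 \<longrightarrow> is_zero U)"
proof -
  let ?k = "length (src U)" and ?m = "length (tgt U)" and ?d = "dif U"
  define X where "X = mmul ?m b a"
  have Xh: "X \<in> hom [e] [e]" unfolding X_def by (rule mmul_hom[OF b a])
  have Ia: "mmul ?m (idm (tgt U)) a = a" by (rule idm_left[OF iT a])
  have XX: "mmul 1 X X = X"
  proof -
    have "mmul 1 X X = mmul ?m b (mmul ?m (mmul 1 a b) a)"
      unfolding X_def by (simp add: mmul_assoc)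
    also have "\<dots> = mmul ?m b a + mmul ?k (mmul ?m b ?d) (mmul ?m H a)"
      unfolding G2 mmul_add_l Ia mmul_add_r by (simp add: mmul_assoc)
    also have "\<dots> = X" unfolding G1 X_def by simp
    finally show ?thesis .
  qed
  have x1: "X 0 0 * X 0 0 = X 0 0" using fun_cong[OF fun_cong[OF XX, of 0], of 0] unfolding mmul_def by simp
  have x2: "X 0 0 \<in> corner e e" using homD1[OF Xh, of 0 0] by simp
  have x3: "is_zero U" if x0: "X 0 0 = 0"
  proof -
    have X0: "X = 0"
    proof (rule ext, rule ext)
      fix p q show "X p q = 0 p q"
        using x0 homD2[OF Xh, of p q] by (cases "p = 0 \<and> q = 0") auto
    qed
    define \<phi> where "\<phi> = mmul 1 a b"
    have dH: "mmul ?k ?d H \<in> hom (tgt U) (tgt U)" by (rule mmul_hom[OF dU H])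
    have It: "idm (tgt U) \<in> hom (tgt U) (tgt U)" by (rule idm_hom[OF iT])
    have ph0: "mmul ?m \<phi> \<phi> = 0"
    proof -
      have "mmul ?m \<phi> \<phi> = mmul 1 a (mmul 1 X b)" unfolding \<phi>_def X_def by (simp add: mmul_assoc)
      then show ?thesis using X0 by simp
    qed
    have dHdH: "mmul ?m (mmul ?k ?d H) (mmul ?k ?d H) = - mmul ?k ?d H"
    proof -
      have "mmul ?m (mmul ?k ?d H) (mmul ?k ?d H) = mmul ?k (mmul ?k ?d (mmul ?m H ?d)) H"
        by (simp add: mmul_assoc)
      also have "\<dots> = mmul ?k (- mmul ?k ?d (idm (src U))) H" unfolding G3 mmul_neg_r ..
      also have "\<dots> = - mmul ?k ?d H" using idm_right[OF iS dU] by (simp add: mmul_neg_l)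
      finally show ?thesis .
    qed
    have eq1: "mmul ?m \<phi> \<phi> = mmul ?m (idm (tgt U)) \<phi> + mmul ?m (mmul ?k ?d H) (idm (tgt U))
          + mmul ?m (mmul ?k ?d H) (mmul ?k ?d H)"
      unfolding \<phi>_def G2 mmul_add_l mmul_add_r by (simp add: add.assoc)
    have i1: "mmul ?m (idm (tgt U)) \<phi> = \<phi>" unfolding \<phi>_def G2
      by (rule idm_left[OF iT hom_add[OF It dH]])
    have i2: "mmul ?m (mmul ?k ?d H) (idm (tgt U)) = mmul ?k ?d H" by (rule idm_right[OF iT dH])
    have "mmul ?m \<phi> \<phi> = \<phi> + mmul ?k ?d H + - mmul ?k ?d H" unfolding eq1 i1 i2 dHdH ..
    then have "mmul ?m \<phi> \<phi> = \<phi>" by simp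
    then have "idm (tgt U) + mmul ?k ?d H = 0" using ph0 unfolding \<phi>_def G2 by simp
    then have c2: "mmul ?k ?d (- H) = idm (tgt U)" by (simp add: mmul_neg_r add_eq_0_iff)
    have c1: "mmul ?m (- H) ?d = idm (src U)" using G3 by (simp add: mmul_neg_l)
    show ?thesis by (rule contractible_zero[OF hom_neg[OF H] c1 c2])
  qed
  show ?thesis using x1 x2 x3 unfolding X_def by blast
qed

lemma blk_idm1: "blk 0 0 (length xs) (length xs) (idm (xs @ ys)) = idm xs"
  unfolding blk_def idm_def by (auto simp: fun_eq_iff nth_append)
lemma blk_idm2: "blk (length xs) (length xs) (length ys) (length ys) (idm (xs @ ys)) = idm ys"
  unfolding blk_def idm_def by (auto simp: fun_eq_iff nth_append)

lemma hom_blk_first: "H \<in> hom (xs @ xs') (ys @ ys') \<Longrightarrow> blk 0 0 (length ys) (length xs) H \<in> hom xs ys"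
  using blk_hom[of H "xs @ xs'" "ys @ ys'" ys 0 xs 0] by (auto simp: nth_append)
lemma hom_blk_second: "H \<in> hom (xs @ xs') (ys @ ys') \<Longrightarrow> blk (length ys) (length xs) (length ys') (length xs') H \<in> hom xs' ys'"
  using blk_hom[of H "xs @ xs'" "ys @ ys'" ys' "length ys" xs' "length xs"] by (auto simp: nth_append)

lemma sum_blk_split:
  "mmul (length xs + length ys) g f 0 0 =
   mmul (length xs) (blk 0 0 1 (length xs) g) (blk 0 0 (length xs) 1 f) 0 0
   + mmul (length ys) (blk 0 (length xs) 1 (length ys) g) (blk (length xs) 0 (length ys) 1 f) 0 0"
  unfolding mmul_def blk_def sum_split by simp

lemma primitive_split:
  assumes p: "primitive_idem e" and x: "x \<in> corner e e" and y: "y \<in> corner e e"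
    and xx: "x * x = x" and yy: "y * y = y" and xy: "x + y = e"
  shows "x = 0 \<or> y = 0"
proof -
  have ie: "idem e" using p unfolding primitive_idem_def by blast
  have y': "y = e - x" using xy by (simp add: algebra_simps)
  have "x * y = 0" unfolding y' using corner_right[OF ie x] xx by (simp add: right_diff_distrib)
  moreover have "y * x = 0" unfolding y' using corner_left[OF ie x] xx by (simp add: left_diff_distrib)
  ultimately show ?thesis using p xx yy xy unfolding primitive_idem_def idem_def by blast
qed

definition cxA :: "'a::ring_1 \<Rightarrow> 'a cx" where "cxA e = ([e], [], \<lambda>_ _. 0)"
definition cxB :: "'a::ring_1 \<Rightarrow> 'a cx" where "cxB e = ([], [e], \<lambda>_ _. 0)"

lemma cxA_simps[simp]: "src (cxA e) = [e]" "tgt (cxA e) = []" "dif (cxA e) = (\<lambda>_ _. 0)"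
  unfolding cxA_def src_def tgt_def dif_def by simp_all
lemma cxB_simps[simp]: "src (cxB e) = []" "tgt (cxB e) = [e]" "dif (cxB e) = (\<lambda>_ _. 0)"
  unfolding cxB_def src_def tgt_def dif_def by simp_all

lemma idm_single00: "idm [e] 0 0 = e" unfolding idm_def by simp

lemma is_cx_idem: "is_cx e1 e2 U \<Longrightarrow> idem e1 \<Longrightarrow> idem e2 \<Longrightarrow> (\<forall>x\<in>set (src U). idem x) \<and> (\<forall>x\<in>set (tgt U). idem x)"
  unfolding is_cx_def by auto

lemma decompA:
  assumes U: "is_cx e1 e2 U" and V: "is_cx e1 e2 V" and i1: "idem e1" and i2: "idem e2"
    and p: "primitive_idem e" and k: "kiso (cxA e) (dsum U V)"
  shows "is_zero U \<or> is_zero V"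
proof -
  let ?W = "dsum U V"
  let ?kU = "length (src U)" and ?mU = "length (tgt U)" and ?kV = "length (src V)" and ?mV = "length (tgt V)"
  have ie: "idem e" using p unfolding primitive_idem_def by blast
  have wU: "wfc U" and wV: "wfc V" using U V unfolding is_cx_def wfc_def by auto
  have iU: "\<forall>x\<in>set (src U). idem x" "\<forall>x\<in>set (tgt U). idem x" using is_cx_idem[OF U i1 i2] by auto
  have iV: "\<forall>x\<in>set (src V). idem x" "\<forall>x\<in>set (tgt V). idem x" using is_cx_idem[OF V i1 i2] by auto
  obtain f g where cf: "chain_map (cxA e) ?W f" and cg: "chain_map ?W (cxA e) g"
    and n1: "null_htp (cxA e) (cxA e) (cm_sub (cm_comp ?W g f) (cm_id (cxA e)))"
    and n2: "null_htp ?W ?W (cm_sub (cm_comp (cxA e) f g) (cm_id ?W))"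
    using k unfolding kiso_def by blast
  define f1 where "f1 = fst f"
  define g1 where "g1 = fst g"
  have f1: "f1 \<in> hom [e] (src U @ src V)" using cf unfolding chain_map_def f1_def by simp
  have g1: "g1 \<in> hom (src U @ src V) [e]" using cg unfolding chain_map_def g1_def by simp
  have E1: "mmul (?kU + ?kV) (dif ?W) f1 = 0" using cf unfolding chain_map_def f1_def by simp
  have E2: "mmul (?kU + ?kV) g1 f1 = idm [e]"
    using n1 unfolding null_htp_def cm_sub_def cm_comp_def cm_id_def msub_eq f1_def g1_def by auto
  obtain H where H: "H \<in> hom (tgt U @ tgt V) (src U @ src V)"
    and E3: "mmul 1 f1 g1 - idm (src U @ src V) = mmul (?mU + ?mV) H (dif ?W)"
    and E4: "- idm (tgt U @ tgt V) = mmul (?kU + ?kV) (dif ?W) H"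
    using n2 unfolding null_htp_def cm_sub_def cm_comp_def cm_id_def msub_eq f1_def g1_def by auto
  have E3': "mmul 1 f1 g1 = idm (src U @ src V) + mmul (?mU + ?mV) H (dif ?W)"
    using E3 by (simp add: algebra_simps)
  define aU where "aU = blk 0 0 ?kU 1 f1"
  define bU where "bU = blk 0 0 1 ?kU g1"
  define HU where "HU = blk 0 0 ?kU ?mU H"
  define aV where "aV = blk ?kU 0 ?kV 1 f1"
  define bV where "bV = blk 0 ?kU 1 ?kV g1"
  define HV where "HV = blk ?kU ?mU ?kV ?mV H"
  have aU: "aU \<in> hom [e] (src U)" unfolding aU_def using blk_first_r[OF f1] by simp
  have aV: "aV \<in> hom [e] (src V)" unfolding aV_def using blk_second_r[OF f1] by simp
  have bU: "bU \<in> hom (src U) [e]" unfolding bU_def using blk_first_c[OF g1] by simp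
  have bV: "bV \<in> hom (src V) [e]" unfolding bV_def using blk_second_c[OF g1] by simp
  have HU: "HU \<in> hom (tgt U) (src U)" unfolding HU_def using hom_blk_first[OF H] .
  have HV: "HV \<in> hom (tgt V) (src V)" unfolding HV_def using hom_blk_second[OF H] .
  have F1U: "mmul ?kU (dif U) aU = 0"
  proof -
    have "blk 0 0 ?mU 1 (mmul (?kU + ?kV) (dif ?W) f1) = mmul ?kU (blk 0 0 ?mU ?kU (dif ?W)) (blk 0 0 ?kU 1 f1)"
      by (rule blk_mmul) (auto simp: dsum_dif)
    then show ?thesis unfolding E1 dsum_blkU[OF wU] aU_def by simp
  qed
  have F1V: "mmul ?kV (dif V) aV = 0"
  proof -
    have "blk ?mU 0 ?mV 1 (mmul (?kU + ?kV) (dif ?W) f1) = mmul ?kV (blk ?mU ?kU ?mV ?kV (dif ?W)) (blk ?kU 0 ?kV 1 f1)"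
      by (rule blk_mmul) (auto simp: dsum_dif)
    then show ?thesis unfolding E1 dsum_blkV[OF wV] aV_def by simp
  qed
  have F2U: "mmul 1 aU bU = idm (src U) + mmul ?mU HU (dif U)"
  proof -
    have "blk 0 0 ?kU ?kU (mmul 1 f1 g1) = mmul 1 (blk 0 0 ?kU 1 f1) (blk 0 0 1 ?kU g1)"
      by (rule blk_mmul) auto
    moreover have "blk 0 0 ?kU ?kU (mmul (?mU + ?mV) H (dif ?W)) = mmul ?mU (blk 0 0 ?kU ?mU H) (blk 0 0 ?mU ?kU (dif ?W))"
      by (rule blk_mmul) (auto simp: dsum_dif)
    ultimately show ?thesis unfolding aU_def bU_def HU_def using E3' blk_add blk_idm1 dsum_blkU[OF wU] by metis
  qed
  have F2V: "mmul 1 aV bV = idm (src V) + mmul ?mV HV (dif V)"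
  proof -
    have "blk ?kU ?kU ?kV ?kV (mmul 1 f1 g1) = mmul 1 (blk ?kU 0 ?kV 1 f1) (blk 0 ?kU 1 ?kV g1)"
      by (rule blk_mmul) auto
    moreover have "blk ?kU ?kU ?kV ?kV (mmul (?mU + ?mV) H (dif ?W)) = mmul ?mV (blk ?kU ?mU ?kV ?mV H) (blk ?mU ?kU ?mV ?kV (dif ?W))"
      by (rule blk_mmul) (auto simp: dsum_dif)
    ultimately show ?thesis unfolding aV_def bV_def HV_def using E3' blk_add blk_idm2 dsum_blkV[OF wV] by metis
  qed
  have F3U: "mmul ?kU (dif U) HU = - idm (tgt U)"
  proof -
    have "blk 0 0 ?mU ?mU (mmul (?kU + ?kV) (dif ?W) H) = mmul ?kU (blk 0 0 ?mU ?kU (dif ?W)) (blk 0 0 ?kU ?mU H)"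
      by (rule blk_mmul) (auto simp: dsum_dif)
    then show ?thesis unfolding HU_def dsum_blkU[OF wU] using E4 blk_neg blk_idm1 by metis
  qed
  have F3V: "mmul ?kV (dif V) HV = - idm (tgt V)"
  proof -
    have "blk ?mU ?mU ?mV ?mV (mmul (?kU + ?kV) (dif ?W) H) = mmul ?kV (blk ?mU ?kU ?mV ?kV (dif ?W)) (blk ?kU ?mU ?kV ?mV H)"
      by (rule blk_mmul) (auto simp: dsum_dif)
    then show ?thesis unfolding HV_def dsum_blkV[OF wV] using E4 blk_neg blk_idm2 by metis
  qed
  have sum: "mmul ?kU bU aU 0 0 + mmul ?kV bV aV 0 0 = e"
    using sum_blk_split[of "src U" "src V" g1 f1] E2 idm_single00[of e]
    unfolding aU_def bU_def aV_def bV_def by simp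
  have cU: "mmul ?kU bU aU 0 0 * mmul ?kU bU aU 0 0 = mmul ?kU bU aU 0 0 \<and> mmul ?kU bU aU 0 0 \<in> corner e e
    \<and> (mmul ?kU bU aU 0 0 = 0 \<longrightarrow> is_zero U)"
    by (rule contract1[OF iU ie wU[unfolded wfc_def] aU bU HU F1U F2U F3U])
  have cV: "mmul ?kV bV aV 0 0 * mmul ?kV bV aV 0 0 = mmul ?kV bV aV 0 0 \<and> mmul ?kV bV aV 0 0 \<in> corner e e
    \<and> (mmul ?kV bV aV 0 0 = 0 \<longrightarrow> is_zero V)"
    by (rule contract1[OF iV ie wV[unfolded wfc_def] aV bV HV F1V F2V F3V])
  show ?thesis using primitive_split[OF p _ _ _ _ sum] cU cV by blast
qed

lemma decompB:
  assumes U: "is_cx e1 e2 U" and V: "is_cx e1 e2 V" and i1: "idem e1" and i2: "idem e2"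
    and p: "primitive_idem e" and k: "kiso (cxB e) (dsum U V)"
  shows "is_zero U \<or> is_zero V"
proof -
  let ?W = "dsum U V"
  let ?kU = "length (src U)" and ?mU = "length (tgt U)" and ?kV = "length (src V)" and ?mV = "length (tgt V)"
  have ie: "idem e" using p unfolding primitive_idem_def by blast
  have wU: "wfc U" and wV: "wfc V" using U V unfolding is_cx_def wfc_def by auto
  have iU: "\<forall>x\<in>set (src U). idem x" "\<forall>x\<in>set (tgt U). idem x" using is_cx_idem[OF U i1 i2] by auto
  have iV: "\<forall>x\<in>set (src V). idem x" "\<forall>x\<in>set (tgt V). idem x" using is_cx_idem[OF V i1 i2] by auto
  obtain f g where cf: "chain_map (cxB e) ?W f" and cg: "chain_map ?W (cxB e) g"
    and n1: "null_htp (cxB e) (cxB e) (cm_sub (cm_comp ?W g f) (cm_id (cxB e)))"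
    and n2: "null_htp ?W ?W (cm_sub (cm_comp (cxB e) f g) (cm_id ?W))"
    using k unfolding kiso_def by blast
  define f0 where "f0 = snd f"
  define g0 where "g0 = snd g"
  have f0: "f0 \<in> hom [e] (tgt U @ tgt V)" using cf unfolding chain_map_def f0_def by simp
  have g0: "g0 \<in> hom (tgt U @ tgt V) [e]" using cg unfolding chain_map_def g0_def by simp
  have E1: "mmul (?mU + ?mV) g0 (dif ?W) = 0" using cg unfolding chain_map_def g0_def by simp
  have E2: "mmul (?mU + ?mV) g0 f0 = idm [e]"
    using n1 unfolding null_htp_def cm_sub_def cm_comp_def cm_id_def msub_eq f0_def g0_def by auto
  obtain H where H: "H \<in> hom (tgt U @ tgt V) (src U @ src V)"
    and E3: "- idm (src U @ src V) = mmul (?mU + ?mV) H (dif ?W)"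
    and E4: "mmul 1 f0 g0 - idm (tgt U @ tgt V) = mmul (?kU + ?kV) (dif ?W) H"
    using n2 unfolding null_htp_def cm_sub_def cm_comp_def cm_id_def msub_eq f0_def g0_def by auto
  have E4': "mmul 1 f0 g0 = idm (tgt U @ tgt V) + mmul (?kU + ?kV) (dif ?W) H"
    using E4 by (simp add: algebra_simps)
  define aU where "aU = blk 0 0 ?mU 1 f0"
  define bU where "bU = blk 0 0 1 ?mU g0"
  define HU where "HU = blk 0 0 ?kU ?mU H"
  define aV where "aV = blk ?mU 0 ?mV 1 f0"
  define bV where "bV = blk 0 ?mU 1 ?mV g0"
  define HV where "HV = blk ?kU ?mU ?kV ?mV H"
  have aU: "aU \<in> hom [e] (tgt U)" unfolding aU_def using blk_first_r[OF f0] by simp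
  have aV: "aV \<in> hom [e] (tgt V)" unfolding aV_def using blk_second_r[OF f0] by simp
  have bU: "bU \<in> hom (tgt U) [e]" unfolding bU_def using blk_first_c[OF g0] by simp
  have bV: "bV \<in> hom (tgt V) [e]" unfolding bV_def using blk_second_c[OF g0] by simp
  have HU: "HU \<in> hom (tgt U) (src U)" unfolding HU_def using hom_blk_first[OF H] .
  have HV: "HV \<in> hom (tgt V) (src V)" unfolding HV_def using hom_blk_second[OF H] .
  have G1U: "mmul ?mU bU (dif U) = 0"
  proof -
    have "blk 0 0 1 ?kU (mmul (?mU + ?mV) g0 (dif ?W)) = mmul ?mU (blk 0 0 1 ?mU g0) (blk 0 0 ?mU ?kU (dif ?W))"
      by (rule blk_mmul) (auto simp: dsum_dif)
    then show ?thesis unfolding E1 dsum_blkU[OF wU] bU_def by simp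
  qed
  have G1V: "mmul ?mV bV (dif V) = 0"
  proof -
    have "blk 0 ?kU 1 ?kV (mmul (?mU + ?mV) g0 (dif ?W)) = mmul ?mV (blk 0 ?mU 1 ?mV g0) (blk ?mU ?kU ?mV ?kV (dif ?W))"
      by (rule blk_mmul) (auto simp: dsum_dif)
    then show ?thesis unfolding E1 dsum_blkV[OF wV] bV_def by simp
  qed
  have G2U: "mmul 1 aU bU = idm (tgt U) + mmul ?kU (dif U) HU"
  proof -
    have "blk 0 0 ?mU ?mU (mmul 1 f0 g0) = mmul 1 (blk 0 0 ?mU 1 f0) (blk 0 0 1 ?mU g0)"
      by (rule blk_mmul) auto
    moreover have "blk 0 0 ?mU ?mU (mmul (?kU + ?kV) (dif ?W) H) = mmul ?kU (blk 0 0 ?mU ?kU (dif ?W)) (blk 0 0 ?kU ?mU H)"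
      by (rule blk_mmul) (auto simp: dsum_dif)
    ultimately show ?thesis unfolding aU_def bU_def HU_def using E4' blk_add blk_idm1 dsum_blkU[OF wU] by metis
  qed
  have G2V: "mmul 1 aV bV = idm (tgt V) + mmul ?kV (dif V) HV"
  proof -
    have "blk ?mU ?mU ?mV ?mV (mmul 1 f0 g0) = mmul 1 (blk ?mU 0 ?mV 1 f0) (blk 0 ?mU 1 ?mV g0)"
      by (rule blk_mmul) auto
    moreover have "blk ?mU ?mU ?mV ?mV (mmul (?kU + ?kV) (dif ?W) H) = mmul ?kV (blk ?mU ?kU ?mV ?kV (dif ?W)) (blk ?kU ?mU ?kV ?mV H)"
      by (rule blk_mmul) (auto simp: dsum_dif)
    ultimately show ?thesis unfolding aV_def bV_def HV_def using E4' blk_add blk_idm2 dsum_blkV[OF wV] by metis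
  qed
  have G3U: "mmul ?mU HU (dif U) = - idm (src U)"
  proof -
    have "blk 0 0 ?kU ?kU (mmul (?mU + ?mV) H (dif ?W)) = mmul ?mU (blk 0 0 ?kU ?mU H) (blk 0 0 ?mU ?kU (dif ?W))"
      by (rule blk_mmul) (auto simp: dsum_dif)
    then show ?thesis unfolding HU_def dsum_blkU[OF wU] using E3 blk_neg blk_idm1 by metis
  qed
  have G3V: "mmul ?mV HV (dif V) = - idm (src V)"
  proof -
    have "blk ?kU ?kU ?kV ?kV (mmul (?mU + ?mV) H (dif ?W)) = mmul ?mV (blk ?kU ?mU ?kV ?mV H) (blk ?mU ?kU ?mV ?kV (dif ?W))"
      by (rule blk_mmul) (auto simp: dsum_dif)
    then show ?thesis unfolding HV_def dsum_blkV[OF wV] using E3 blk_neg blk_idm2 by metis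
  qed
  have sum: "mmul ?mU bU aU 0 0 + mmul ?mV bV aV 0 0 = e"
    using sum_blk_split[of "tgt U" "tgt V" g0 f0] E2 idm_single00[of e]
    unfolding aU_def bU_def aV_def bV_def by simp
  have cU: "mmul ?mU bU aU 0 0 * mmul ?mU bU aU 0 0 = mmul ?mU bU aU 0 0 \<and> mmul ?mU bU aU 0 0 \<in> corner e e
    \<and> (mmul ?mU bU aU 0 0 = 0 \<longrightarrow> is_zero U)"
    by (rule contract2[OF iU ie wU[unfolded wfc_def] aU bU HU G1U G2U G3U])
  have cV: "mmul ?mV bV aV 0 0 * mmul ?mV bV aV 0 0 = mmul ?mV bV aV 0 0 \<and> mmul ?mV bV aV 0 0 \<in> corner e e
    \<and> (mmul ?mV bV aV 0 0 = 0 \<longrightarrow> is_zero V)"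
    by (rule contract2[OF iV ie wV[unfolded wfc_def] aV bV HV G1V G2V G3V])
  show ?thesis using primitive_split[OF p _ _ _ _ sum] cU cV by blast
qed

lemma not_zero_A: "primitive_idem e \<Longrightarrow> \<not> is_zero (cxA e)"
proof
  assume p: "primitive_idem e" and z: "is_zero (cxA e)"
  then obtain f g where "null_htp (cxA e) (cxA e) (cm_sub (cm_comp zero_cx g f) (cm_id (cxA e)))"
    unfolding is_zero_def kiso_def by blast
  then have eq: "0 - idm [e] = (0 :: 'a mat)"
    unfolding null_htp_def cm_sub_def cm_comp_def cm_id_def msub_eq by auto
  have "(0 - idm [e]) 0 0 = (0 :: 'a mat) 0 0" using fun_cong[OF fun_cong[OF eq]] .
  then have "idm [e] 0 0 = 0" by simp
  then show False using p idm_single00[of e] unfolding primitive_idem_def by simp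
qed

lemma not_zero_B: "primitive_idem e \<Longrightarrow> \<not> is_zero (cxB e)"
proof
  assume p: "primitive_idem e" and z: "is_zero (cxB e)"
  then obtain f g where "null_htp (cxB e) (cxB e) (cm_sub (cm_comp zero_cx g f) (cm_id (cxB e)))"
    unfolding is_zero_def kiso_def by blast
  then have eq: "0 - idm [e] = (0 :: 'a mat)"
    unfolding null_htp_def cm_sub_def cm_comp_def cm_id_def msub_eq by auto
  have "(0 - idm [e]) 0 0 = (0 :: 'a mat) 0 0" using fun_cong[OF fun_cong[OF eq]] .
  then have "idm [e] 0 0 = 0" by simp
  then show False using p idm_single00[of e] unfolding primitive_idem_def by simp
qed

lemma indecA:
  assumes "primitive_idem e" "e \<in> {e1, e2}" "idem e1" "idem e2"
  shows "indec e1 e2 (cxA e)"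
  unfolding indec_def
proof (intro conjI allI impI)
  show "is_cx e1 e2 (cxA e)" using assms(2) unfolding is_cx_def by simp
  show "\<not> is_zero (cxA e)" by (rule not_zero_A[OF assms(1)])
  fix U V assume "is_cx e1 e2 U \<and> is_cx e1 e2 V \<and> kiso (cxA e) (dsum U V)"
  then show "is_zero U \<or> is_zero V" using decompA[OF _ _ assms(3,4,1)] by blast
qed

lemma indecB:
  assumes "primitive_idem e" "e \<in> {e1, e2}" "idem e1" "idem e2"
  shows "indec e1 e2 (cxB e)"
  unfolding indec_def
proof (intro conjI allI impI)
  show "is_cx e1 e2 (cxB e)" using assms(2) unfolding is_cx_def by simp
  show "\<not> is_zero (cxB e)" by (rule not_zero_B[OF assms(1)])
  fix U V assume "is_cx e1 e2 U \<and> is_cx e1 e2 V \<and> kiso (cxB e) (dsum U V)"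
  then show "is_zero U \<or> is_zero V" using decompB[OF _ _ assms(3,4,1)] by blast
qed

lemma not_kiso_AB:
  assumes "primitive_idem e"
  shows "\<not> kiso (cxA e) (cxB e')"
proof
  assume "kiso (cxA e) (cxB e')"
  then obtain f g where cf: "chain_map (cxA e) (cxB e') f"
    and n: "null_htp (cxA e) (cxA e) (cm_sub (cm_comp (cxB e') g f) (cm_id (cxA e)))"
    unfolding kiso_def by blast
  have "fst f \<in> hom [e] []" using cf unfolding chain_map_def by simp
  then have f0: "fst f = 0" by (auto simp: fun_eq_iff homD2)
  from n have eq: "mmul 0 (fst g) (fst f) - idm [e] = (0 :: 'a mat)"
    unfolding null_htp_def cm_sub_def cm_comp_def cm_id_def msub_eq by auto
  have "(mmul 0 (fst g) (fst f) - idm [e]) 0 0 = (0 :: 'a mat) 0 0" using fun_cong[OF fun_cong[OF eq]] .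
  then have "idm [e] 0 0 = 0" by simp
  then show False using assms idm_single00[of e] unfolding primitive_idem_def by simp
qed

lemma kiso_sym: "kiso T U \<Longrightarrow> kiso U T"
  unfolding kiso_def by blast

lemma lin_comb:
  fixes a b :: real
  shows "a * fst (\<Sum>v\<in>F. c v *\<^sub>R v) + b * snd (\<Sum>v\<in>F. c v *\<^sub>R v) = (\<Sum>v\<in>F. c v * (a * fst v + b * snd v))"
proof -
  have "(\<Sum>v\<in>F. c v * (a * fst v + b * snd v)) = (\<Sum>v\<in>F. a * (c v * fst v) + b * (c v * snd v))"
    by (rule sum.cong) (simp_all add: algebra_simps)
  also have "\<dots> = a * (\<Sum>v\<in>F. c v * fst v) + b * (\<Sum>v\<in>F. c v * snd v)"
    by (simp add: sum.distrib sum_distrib_left)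
  finally show ?thesis by (simp add: fst_sum snd_sum)
qed

lemma poscone_obtain:
  assumes "w \<in> poscone S"
  obtains F c where "finite F" "F \<subseteq> S" "\<forall>v. c v \<ge> 0" "w = (\<Sum>v\<in>F. c v *\<^sub>R v)"
  using assms unfolding poscone_def by blast

lemma cone_extract:
  fixes a b a' b' :: real and S :: "(real \<times> real) set"
  assumes pos: "\<forall>v\<in>S. a * fst v + b * snd v \<ge> 0 \<and> a' * fst v + b' * snd v \<ge> 0"
    and w: "w \<in> poscone S" and w1: "a * fst w + b * snd w > 0" and w2: "a' * fst w + b' * snd w = 0"
  shows "\<exists>v\<in>S. a * fst v + b * snd v > 0 \<and> a' * fst v + b' * snd v = 0"
proof -
  obtain F c where F: "finite F" "F \<subseteq> S" "\<forall>v. c v \<ge> 0" and wF: "w = (\<Sum>v\<in>F. c v *\<^sub>R v)"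
    using w unfolding poscone_def by blast
  have lin: "a * fst w + b * snd w = (\<Sum>v\<in>F. c v * (a * fst v + b * snd v))" for a b
    unfolding wF by (rule lin_comb)
  have nn: "0 \<le> c v * (a' * fst v + b' * snd v)" if "v \<in> F" for v
  proof -
    have "c v \<ge> 0" using F(3) by blast
    moreover have "a' * fst v + b' * snd v \<ge> 0" using pos F that by auto
    ultimately show ?thesis by simp
  qed
  have "(\<Sum>v\<in>F. c v * (a' * fst v + b' * snd v)) = 0" using w2 lin[of a' b'] by simp
  moreover have "(\<Sum>v\<in>F. c v * (a' * fst v + b' * snd v)) = 0 \<longleftrightarrow> (\<forall>v\<in>F. c v * (a' * fst v + b' * snd v) = 0)"
    by (rule sum_nonneg_eq_0_iff[OF F(1)]) (rule nn)
  ultimately have z: "\<forall>v\<in>F. c v * (a' * fst v + b' * snd v) = 0" by blast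
  have "\<exists>v\<in>F. c v * (a * fst v + b * snd v) > 0"
  proof (rule ccontr)
    assume "\<not> (\<exists>v\<in>F. c v * (a * fst v + b * snd v) > 0)"
    then have "\<forall>v\<in>F. c v * (a * fst v + b * snd v) \<le> 0" by (simp add: not_less)
    then have "(\<Sum>v\<in>F. c v * (a * fst v + b * snd v)) \<le> 0" by (simp add: sum_nonpos)
    then show False using w1 lin[of a b] by simp
  qed
  then obtain v where v: "v \<in> F" "c v * (a * fst v + b * snd v) > 0" by blast
  have "c v \<noteq> 0" using v(2) by auto
  moreover have "c v \<ge> 0" using F(3) by blast
  ultimately have cv: "c v > 0" by simp
  have "a * fst v + b * snd v > 0" using v(2) cv by (simp add: zero_less_mult_iff)
  moreover have "c v * (a' * fst v + b' * snd v) = 0" using z v(1) by blast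
  then have "a' * fst v + b' * snd v = 0" using cv by simp
  ultimately show ?thesis using v(1) F(2) by blast
qed

lemma poscone_self: "v \<in> S \<Longrightarrow> v \<in> poscone S"
  unfolding poscone_def by (rule CollectI, rule exI[of _ "{v}"], rule exI[of _ "\<lambda>_. 1"]) simp

lemma cone_pts:
  fixes \<sigma> \<tau> :: real
  assumes s: "\<sigma> * \<sigma> = 1" and t: "\<tau> * \<tau> = 1" and eq: "poscone S = poscone {(\<sigma>, 0), (0, \<tau>)}"
  shows "(\<exists>v\<in>S. \<sigma> * fst v > 0 \<and> snd v = 0) \<and> (\<exists>v\<in>S. fst v = 0 \<and> \<tau> * snd v > 0)"
proof -
  have sign: "\<sigma> * fst w \<ge> 0 \<and> \<tau> * snd w \<ge> 0" if wP: "w \<in> poscone {(\<sigma>, 0), (0, \<tau>)}" for w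
  proof -
    obtain F c where F: "finite F" "F \<subseteq> {(\<sigma>, 0), (0, \<tau>)}" "\<forall>v. c v \<ge> 0" and wF: "w = (\<Sum>v\<in>F. c v *\<^sub>R v)"
      by (rule poscone_obtain[OF wP])
    have l1: "\<sigma> * fst w + 0 * snd w = (\<Sum>v\<in>F. c v * (\<sigma> * fst v + 0 * snd v))" unfolding wF by (rule lin_comb)
    have l2: "0 * fst w + \<tau> * snd w = (\<Sum>v\<in>F. c v * (0 * fst v + \<tau> * snd v))" unfolding wF by (rule lin_comb)
    have nn: "c v * (\<sigma> * fst v + 0 * snd v) \<ge> 0 \<and> c v * (0 * fst v + \<tau> * snd v) \<ge> 0" if "v \<in> F" for v
    proof -
      have cv: "c v \<ge> 0" using F(3) by blast
      have "v = (\<sigma>, 0) \<or> v = (0, \<tau>)" using F(2) that by blast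
      then show ?thesis using cv s t by auto
    qed
    have "(\<Sum>v\<in>F. c v * (\<sigma> * fst v + 0 * snd v)) \<ge> 0" by (rule sum_nonneg) (use nn in blast)
    moreover have "(\<Sum>v\<in>F. c v * (0 * fst v + \<tau> * snd v)) \<ge> 0" by (rule sum_nonneg) (use nn in blast)
    ultimately show ?thesis using l1 l2 by simp
  qed
  have pos: "\<forall>v\<in>S. \<sigma> * fst v + 0 * snd v \<ge> 0 \<and> 0 * fst v + \<tau> * snd v \<ge> 0"
  proof
    fix v assume "v \<in> S"
    then have "v \<in> poscone {(\<sigma>, 0), (0, \<tau>)}" using poscone_self[of v S] eq by simp
    then show "\<sigma> * fst v + 0 * snd v \<ge> 0 \<and> 0 * fst v + \<tau> * snd v \<ge> 0" using sign by simp
  qed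
  have pos': "\<forall>v\<in>S. 0 * fst v + \<tau> * snd v \<ge> 0 \<and> \<sigma> * fst v + 0 * snd v \<ge> 0" using pos by blast
  have w1: "(\<sigma>, 0) \<in> poscone S" using eq poscone_self[of "(\<sigma>, 0)"] by auto
  have w2: "(0, \<tau>) \<in> poscone S" using eq poscone_self[of "(0, \<tau>)"] by auto
  have t0: "\<tau> \<noteq> 0" "\<sigma> \<noteq> 0" using s t by auto
  have "\<exists>v\<in>S. \<sigma> * fst v + 0 * snd v > 0 \<and> 0 * fst v + \<tau> * snd v = 0"
    by (rule cone_extract[OF pos w1]) (use s in simp_all)
  moreover have "\<exists>v\<in>S. 0 * fst v + \<tau> * snd v > 0 \<and> \<sigma> * fst v + 0 * snd v = 0"
    by (rule cone_extract[OF pos' w2]) (use t in simp_all)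
  ultimately show ?thesis using t0 by auto
qed

lemma presilting_AB:
  assumes "corner e' e = {0}"
  shows "presilting (foldr dsum [cxA e, cxB e'] zero_cx)"
  unfolding presilting_def
proof
  let ?T = "foldr dsum [cxA e, cxB e'] zero_cx"
  fix h assume h: "h \<in> hom (src ?T) (tgt ?T)"
  have "h = 0"
  proof (rule ext, rule ext)
    fix p q
    show "h p q = 0 p q"
    proof (cases "p = 0 \<and> q = 0")
      case True
      then show ?thesis using homD1[OF h, of 0 0] assms by simp
    next
      case False
      then show ?thesis using homD2[OF h, of p q] by auto
    qed
  qed
  then show "\<exists>s\<in>hom (tgt ?T) (tgt ?T). \<exists>t\<in>hom (src ?T) (src ?T).
      h = madd (mmul (length (tgt ?T)) s (dif ?T)) (mmul (length (src ?T)) (dif ?T) t)"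
    by (intro bexI[of _ 0]) (auto simp: madd_eq')
qed

lemma mult_simps: "mult x [] = 0" "mult x [y] = (if y = x then 1 else 0)"
  unfolding mult_def by auto

lemma gfan_AB:
  assumes p: "primitive_idem e" "primitive_idem e'" and ee: "e \<noteq> e'" and E: "{e, e'} = {e1, e2}"
    and i: "idem e1" "idem e2" and c: "corner e' e = {0}"
  shows "poscone {gvec e1 e2 (cxA e), gvec e1 e2 (cxB e')} \<in> gfan e1 e2"
proof -
  let ?Ts = "[cxA e, cxB e']"
  have ind: "\<forall>T\<in>set ?Ts. indec e1 e2 T" using indecA[OF p(1) _ i] indecB[OF p(2) _ i] E by auto
  have nk: "\<forall>i<length ?Ts. \<forall>j<length ?Ts. i \<noteq> j \<longrightarrow> \<not> kiso (?Ts ! i) (?Ts ! j)"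
  proof (intro allI impI)
    fix i j assume "i < length ?Ts" "j < length ?Ts" "i \<noteq> j"
    then have "(i = 0 \<and> j = 1) \<or> (i = 1 \<and> j = 0)" by auto
    then show "\<not> kiso (?Ts ! i) (?Ts ! j)" using not_kiso_AB[OF p(1), of e'] kiso_sym[of "cxB e'" "cxA e"] by auto
  qed
  have "poscone (gvec e1 e2 ` set ?Ts) \<in> gfan e1 e2"
    unfolding gfan_def
    apply (rule CollectI)
    apply (rule exI[of _ ?Ts])
    using ind nk presilting_AB[OF c] by simp
  then show ?thesis by simp
qed

lemma from_gfan:
  fixes sc :: "'k::field \<Rightarrow> 'a::ring_1 \<Rightarrow> 'a" and e e' e1 e2 :: 'a
  assumes fd: "fd_algebra sc" and ie: "idem e" "idem e'" and ee: "e \<noteq> e'" and E: "{e, e'} = {e1, e2}"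
    and Ts: "\<forall>T\<in>set Ts. indec e1 e2 T" "presilting (foldr dsum Ts zero_cx)"
    and T: "T \<in> set Ts" "mult e (tgt T) < mult e (src T)" "mult e' (tgt T) = mult e' (src T)"
    and T': "T' \<in> set Ts" "mult e (tgt T') = mult e (src T')" "mult e' (src T') < mult e' (tgt T')"
  shows "corner e' e = {0}"
proof -
  interpret fdalg sc by (unfold_locales) (rule fd)
  have cx: "\<forall>T\<in>set Ts. is_cx e1 e2 T" using Ts(1) unfolding indec_def by blast
  have wfc: "\<forall>T\<in>set Ts. wfc T" using cx unfolding is_cx_def wfc_def by blast
  have cr: "cross T T'" by (rule presilting_pairs[OF wfc Ts(2) T(1) T'(1)])
  have sT: "set (src T) \<subseteq> {e, e'}" "set (tgt T) \<subseteq> {e, e'}" "dif T \<in> hom (src T) (tgt T)"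
    using cx T(1) E unfolding is_cx_def by auto
  have sT': "set (src T') \<subseteq> {e, e'}" "set (tgt T') \<subseteq> {e, e'}" "dif T' \<in> hom (src T') (tgt T')"
    using cx T'(1) E unfolding is_cx_def by auto
  show ?thesis
    by (rule core[OF ee sT(1) sT(2) sT'(1) sT'(2) sT(3) sT'(3) cr[unfolded cross_def] T(2) T(3) T'(2) T'(3)])
qed


theorem proposition3p5:
  fixes sc :: "'k::field \<Rightarrow> 'a::ring_1 \<Rightarrow> 'a" and e1 e2 :: 'a
  assumes "fd_algebra sc"
    and "primitive_idem e1" and "primitive_idem e2"
    and "e1 * e2 = 0" and "e2 * e1 = 0" and "e1 + e2 = 1"
  shows "(poscone {(-1, 0), (0, 1)} \<in> gfan e1 e2 \<longleftrightarrow> corner e2 e1 = {0})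
       \<and> (poscone {(1, 0), (0, -1)} \<in> gfan e1 e2 \<longleftrightarrow> corner e1 e2 = {0})"
proof -
  note fd = assms(1) and p1 = assms(2) and p2 = assms(3)
  have i1: "idem e1" and i2: "idem e2" using p1 p2 unfolding primitive_idem_def by auto
  have ne: "e1 \<noteq> e2"
  proof
    assume "e1 = e2"
    then have "e1 * e1 = 0" using assms(4) by simp
    then show False using p1 unfolding primitive_idem_def idem_def by simp
  qed
  have gA1: "gvec e1 e2 (cxA e1) = (-1, 0)" and gB2: "gvec e1 e2 (cxB e2) = (0, 1)"
   and gA2: "gvec e1 e2 (cxA e2) = (0, -1)" and gB1: "gvec e1 e2 (cxB e1) = (1, 0)"
    unfolding gvec_def using ne by (auto simp: mult_simps)
  have gfan_obt: "\<exists>Ts. (\<forall>T\<in>set Ts. indec e1 e2 T) \<and> presilting (foldr dsum Ts zero_cx)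
      \<and> poscone (gvec e1 e2 ` set Ts) = C" if "C \<in> gfan e1 e2" for C
    using that unfolding gfan_def by blast
  have A: "poscone {(-1, 0), (0, 1)} \<in> gfan e1 e2 \<longleftrightarrow> corner e2 e1 = {0}"
  proof
    assume "poscone {(-1, 0), (0, 1)} \<in> gfan e1 e2"
    then obtain Ts where Ts: "\<forall>T\<in>set Ts. indec e1 e2 T" "presilting (foldr dsum Ts zero_cx)"
      and eq: "poscone (gvec e1 e2 ` set Ts) = poscone {(-1, 0), (0, 1)}"
      using gfan_obt by blast
    have cp: "(\<exists>v\<in>gvec e1 e2 ` set Ts. (-1) * fst v > 0 \<and> snd v = 0) \<and> (\<exists>v\<in>gvec e1 e2 ` set Ts. fst v = 0 \<and> 1 * snd v > 0)"
      by (rule cone_pts) (use eq in simp_all)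
    then obtain T T' where T: "T \<in> set Ts" "(-1) * fst (gvec e1 e2 T) > 0" "snd (gvec e1 e2 T) = 0"
      and T': "T' \<in> set Ts" "fst (gvec e1 e2 T') = 0" "1 * snd (gvec e1 e2 T') > 0" by blast
    show "corner e2 e1 = {0}"
      by (rule from_gfan[OF fd i1 i2 ne refl Ts T(1) _ _ T'(1)]) (use T T' in \<open>auto simp: gvec_def\<close>)
  next
    assume c: "corner e2 e1 = {0}"
    show "poscone {(-1, 0), (0, 1)} \<in> gfan e1 e2"
      using gfan_AB[OF p1 p2 ne refl i1 i2 c] gA1 gB2 by simp
  qed
  have B: "poscone {(1, 0), (0, -1)} \<in> gfan e1 e2 \<longleftrightarrow> corner e1 e2 = {0}"
  proof
    assume "poscone {(1, 0), (0, -1)} \<in> gfan e1 e2"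
    then obtain Ts where Ts: "\<forall>T\<in>set Ts. indec e1 e2 T" "presilting (foldr dsum Ts zero_cx)"
      and eq: "poscone (gvec e1 e2 ` set Ts) = poscone {(1, 0), (0, -1)}"
      using gfan_obt by blast
    have cp: "(\<exists>v\<in>gvec e1 e2 ` set Ts. 1 * fst v > 0 \<and> snd v = 0) \<and> (\<exists>v\<in>gvec e1 e2 ` set Ts. fst v = 0 \<and> (-1) * snd v > 0)"
      by (rule cone_pts) (use eq in simp_all)
    then obtain T T' where T: "T \<in> set Ts" "1 * fst (gvec e1 e2 T) > 0" "snd (gvec e1 e2 T) = 0"
      and T': "T' \<in> set Ts" "fst (gvec e1 e2 T') = 0" "(-1) * snd (gvec e1 e2 T') > 0" by blast
    have E: "{e2, e1} = {e1, e2}" by (rule insert_commute)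
    show "corner e1 e2 = {0}"
      by (rule from_gfan[OF fd i2 i1 ne[symmetric] E Ts T'(1) _ _ T(1)]) (use T T' in \<open>auto simp: gvec_def\<close>)
  next
    assume c: "corner e1 e2 = {0}"
    have E: "{e2, e1} = {e1, e2}" by (rule insert_commute)
    have "poscone {gvec e1 e2 (cxA e2), gvec e1 e2 (cxB e1)} \<in> gfan e1 e2"
      by (rule gfan_AB[OF p2 p1 ne[symmetric] E i1 i2 c])
    moreover have "{gvec e1 e2 (cxA e2), gvec e1 e2 (cxB e1)} = {(1, 0), (0, -1)}"
      using gA2 gB1 by auto
    ultimately show "poscone {(1, 0), (0, -1)} \<in> gfan e1 e2" by simp
  qed
  show ?thesis using A B by blast
qed

end
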